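(* Let $C\subseteq\omega$ be noncomputable and let $A\subseteq\omega$ be an infinite set whose complement $\omega\setminus A$ is hyperimmune. Then there is an infinite subset $G\subseteq A$ which does not compute $C$. *)

theory Defs
  imports Main "HOL-Library.Infinite_Set"
begin

datatype recf = Zero | Succ | Proj nat | Comp recf "recf list" | Prim recf recf | Mn recf | Orc

inductive eval :: "nat set \<Rightarrow> recf \<Rightarrow> nat list \<Rightarrow> nat \<Rightarrow> bool"
  for X :: "nat set" where
  zero: "eval X Zero xs 0"
| succ: "eval X Succ [x] (Suc x)"
| proj: "i < length xs \<Longrightarrow> eval X (Proj i) xs (xs ! i)"
| orc: "eval X Orc [x] (if x \<in> X then 1 else 0)"
| comp: "list_all2 (\<lambda>g y. eval X g xs y) gs ys \<Longrightarrow> eval X f ys z \<Longrightarrow> eval X (Comp f gs) xs z"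
| prim0: "eval X f xs z \<Longrightarrow> eval X (Prim f g) (0 # xs) z"
| primS: "eval X (Prim f g) (n # xs) r \<Longrightarrow> eval X g (n # r # xs) z
          \<Longrightarrow> eval X (Prim f g) (Suc n # xs) z"
| mn: "eval X f (n # xs) 0 \<Longrightarrow> (\<forall>m<n. \<exists>y. eval X f (m # xs) y \<and> y \<noteq> 0)
          \<Longrightarrow> eval X (Mn f) xs n"
monos list.rel_mono

definition rel_computable :: "nat set \<Rightarrow> (nat \<Rightarrow> nat) \<Rightarrow> bool" where
  "rel_computable X f \<longleftrightarrow> (\<exists>p. \<forall>x. eval X p [x] (f x))"

definition computable_fun :: "(nat \<Rightarrow> nat) \<Rightarrow> bool" where
  "computable_fun f \<longleftrightarrow> rel_computable {} f"

definition turing_reducible :: "nat set \<Rightarrow> nat set \<Rightarrow> bool" where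
  "turing_reducible C G \<longleftrightarrow> rel_computable G (\<lambda>x. if x \<in> C then 1 else 0)"

definition computable_set :: "nat set \<Rightarrow> bool" where
  "computable_set C \<longleftrightarrow> turing_reducible C {}"

definition hyperimmune :: "nat set \<Rightarrow> bool" where
  "hyperimmune B \<longleftrightarrow> infinite B \<and>
     \<not> (\<exists>f. computable_fun f \<and> (\<forall>n. enumerate B n \<le> f n))"

end

theory Submission
  imports Defs "HOL-Library.Countable" "HOL-Library.Nat_Bijection"
begin


lemma list_all2_det:
  assumes "list_all2 (\<lambda>g y. P g y \<and> (\<forall>y'. Q g y' \<longrightarrow> y = y')) gs ys"
    and "list_all2 Q gs ys'"
  shows "ys = ys'"
  using assms
proof (induction arbitrary: ys' rule: list_all2_induct)
  case Nil then show ?case by simp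
next
  case (Cons g gs y ys)
  then obtain y1 ys1 where "ys' = y1 # ys1" "Q g y1" "list_all2 Q gs ys1"
    by (cases ys') auto
  with Cons show ?case by auto
qed

inductive_cases evalE_Zero[elim!]: "eval X Zero xs y"
inductive_cases evalE_Succ[elim!]: "eval X Succ xs y"
inductive_cases evalE_Proj[elim!]: "eval X (Proj i) xs y"
inductive_cases evalE_Orc[elim!]: "eval X Orc xs y"
inductive_cases evalE_Comp: "eval X (Comp f gs) xs y"
inductive_cases evalE_Prim: "eval X (Prim f g) xs y"
inductive_cases evalE_Mn: "eval X (Mn f) xs y"

lemma eval_det: "eval X p xs y \<Longrightarrow> eval X p xs y' \<Longrightarrow> y = y'"
proof (induction arbitrary: y' rule: eval.induct)
  case (zero xs) then show ?case by auto
next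
  case (succ x) then show ?case by auto
next
  case (proj i xs) then show ?case by auto
next
  case (orc x) then show ?case by auto
next
  case (comp xs gs ys f z)
  from comp.prems obtain ys' where a: "list_all2 (\<lambda>g y. eval X g xs y) gs ys'" "eval X f ys' y'"
    by (auto elim: evalE_Comp)
  have "list_all2 (\<lambda>g y. eval X g xs y \<and> (\<forall>y'. eval X g xs y' \<longrightarrow> y = y')) gs ys"
    using comp(1) by (rule list_all2_mono) auto
  then have "ys = ys'" using a(1) by (rule list_all2_det)
  then show ?case using comp a by auto
next
  case (prim0 f xs z g) from prim0.prems show ?case by (rule evalE_Prim) (use prim0.IH in auto)
next
  case (primS f g n xs r z) 
  from primS.prems obtain r' where "eval X (Prim f g) (n # xs) r'" "eval X g (n # r' # xs) y'"
    by (rule evalE_Prim) auto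
  with primS show ?case by auto
next
  case (mn f n xs)
  from mn.prems have a: "eval X f (y' # xs) 0" "\<forall>m<y'. \<exists>y. eval X f (m # xs) y \<and> y \<noteq> 0"
    by (rule evalE_Mn; auto)+
  show ?case
  proof (rule ccontr)
    assume "n \<noteq> y'"
    then consider "n < y'" | "y' < n" by linarith
    then show False
    proof cases
      case 1 with a mn.IH(1) show False by blast
    next
      case 2 with a mn(3) show False by blast
    qed
  qed
qed

definition agree :: "nat set \<Rightarrow> nat set \<Rightarrow> nat \<Rightarrow> bool" where
  "agree X Y w \<longleftrightarrow> X \<inter> {..<w} = Y \<inter> {..<w}"

lemma agree_mono: "agree X Y w' \<Longrightarrow> w \<le> w' \<Longrightarrow> agree X Y w"
  unfolding agree_def set_eq_iff by (meson Int_iff lessThan_iff order_less_le_trans)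

lemma agree_max1: "agree X Y (max a b) \<Longrightarrow> agree X Y a"
  by (rule agree_mono[of _ _ "max a b"]) simp_all
lemma agree_max2: "agree X Y (max a b) \<Longrightarrow> agree X Y b"
  by (rule agree_mono[of _ _ "max a b"]) simp_all

lemma bounded_choice:
  fixes n :: nat and Q :: "nat \<Rightarrow> nat \<Rightarrow> bool"
  assumes "\<forall>m<n. \<exists>w. Q m w" and "\<And>m w w'. Q m w \<Longrightarrow> w \<le> w' \<Longrightarrow> Q m w'"
  shows "\<exists>w. \<forall>m<n. Q m w"
  using assms(1)
proof (induction n)
  case 0 then show ?case by simp
next
  case (Suc n)
  then obtain w1 where w1: "\<forall>m<n. Q m w1" by auto
  from Suc.prems obtain w2 where w2: "Q n w2" by auto
  show ?case
  proof (intro exI allI impI)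
    fix m assume "m < Suc n"
    then consider "m < n" | "m = n" by linarith
    then show "Q m (max w1 w2)"
    proof cases
      case 1
      with w1 have "Q m w1" by simp
      then show ?thesis by (rule assms(2)) simp
    next
      case 2
      with w2 have "Q m w2" by simp
      then show ?thesis by (rule assms(2)) simp
    qed
  qed
qed

lemma list_all2_use:
  assumes "list_all2 (\<lambda>g y. \<exists>w. \<forall>Y. agree X Y w \<longrightarrow> eval Y g xs y) gs ys"
  shows "\<exists>w. \<forall>Y. agree X Y w \<longrightarrow> list_all2 (\<lambda>g y. eval Y g xs y) gs ys"
  using assms
proof (induction rule: list_all2_induct)
  case Nil then show ?case by auto
next
  case (Cons g gs y ys)
  then obtain w1 w2 where "\<forall>Y. agree X Y w1 \<longrightarrow> eval Y g xs y"
     "\<forall>Y. agree X Y w2 \<longrightarrow> list_all2 (\<lambda>g y. eval Y g xs y) gs ys" by auto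
  then show ?case
    by (intro exI[of _ "max w1 w2"]) (auto dest: agree_max1 agree_max2)
qed

lemma eval_use: "eval X p xs y \<Longrightarrow> \<exists>w. \<forall>Y. agree X Y w \<longrightarrow> eval Y p xs y"
proof (induction rule: eval.induct)
  case (zero xs) then show ?case by (auto intro: eval.zero)
next
  case (succ x) then show ?case by (auto intro: eval.succ)
next
  case (proj i xs) then show ?case by (auto intro: eval.proj)
next
  case (orc x)
  show ?case
  proof (intro exI allI impI)
    fix Y assume "agree X Y (Suc x)"
    then have "(x \<in> X) = (x \<in> Y)" unfolding agree_def set_eq_iff by (meson Int_iff lessThan_iff lessI)
    then show "eval Y Orc [x] (if x \<in> X then 1 else 0)" using eval.orc[of Y x] by simp
  qed
next
  case (comp xs gs ys f z)
  have "list_all2 (\<lambda>g y. \<exists>w. \<forall>Y. agree X Y w \<longrightarrow> eval Y g xs y) gs ys"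
    using comp(1) by (rule list_all2_mono) auto
  from list_all2_use[OF this] obtain w1 where
    w1: "\<forall>Y. agree X Y w1 \<longrightarrow> list_all2 (\<lambda>g y. eval Y g xs y) gs ys" by blast
  from comp.IH obtain w2 where w2: "\<forall>Y. agree X Y w2 \<longrightarrow> eval Y f ys z" by blast
  show ?case
    by (rule exI[of _ "max w1 w2"]) (use w1 w2 in \<open>auto dest: agree_max1 agree_max2 intro: eval.comp\<close>)
next
  case (prim0 f xs z g) then show ?case by (auto intro: eval.prim0)
next
  case (primS f g n xs r z)
  then obtain w1 w2 where "\<forall>Y. agree X Y w1 \<longrightarrow> eval Y (Prim f g) (n # xs) r"
    "\<forall>Y. agree X Y w2 \<longrightarrow> eval Y g (n # r # xs) z" by blast
  then show ?case
    by (intro exI[of _ "max w1 w2"]) (auto dest: agree_max1 agree_max2 intro: eval.primS)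
next
  case (mn f n xs)
  have "\<forall>m<n. \<exists>w. \<forall>Y. agree X Y w \<longrightarrow> (\<exists>y. eval Y f (m # xs) y \<and> y \<noteq> 0)"
    using mn.IH(2) by blast
  moreover have "\<And>m w w'. \<forall>Y. agree X Y w \<longrightarrow> (\<exists>y. eval Y f (m # xs) y \<and> y \<noteq> 0) \<Longrightarrow> w \<le> w' \<Longrightarrow>
     \<forall>Y. agree X Y w' \<longrightarrow> (\<exists>y. eval Y f (m # xs) y \<and> y \<noteq> 0)"
    using agree_mono by blast
  ultimately obtain w1 where
    w1: "\<forall>m<n. \<forall>Y. agree X Y w1 \<longrightarrow> (\<exists>y. eval Y f (m # xs) y \<and> y \<noteq> 0)"
    using bounded_choice[where Q="\<lambda>m w. \<forall>Y. agree X Y w \<longrightarrow> (\<exists>y. eval Y f (m # xs) y \<and> y \<noteq> 0)"]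
    by blast
  from mn.IH(1) obtain w2 where w2: "\<forall>Y. agree X Y w2 \<longrightarrow> eval Y f (n # xs) 0" by blast
  show ?case
  proof (intro exI allI impI)
    fix Y assume "agree X Y (max w1 w2)"
    then have "agree X Y w1" "agree X Y w2" using agree_max1 agree_max2 by blast+
    then show "eval Y (Mn f) xs n" using w1 w2 by (intro eval.mn) auto
  qed
qed



definition rfn :: "recf \<Rightarrow> nat \<Rightarrow> (nat list \<Rightarrow> nat) \<Rightarrow> bool" where
  "rfn p k F \<longleftrightarrow> (\<forall>xs. length xs = k \<longrightarrow> eval {} p xs (F xs))"

lemma rfn_cong: "rfn p k F \<Longrightarrow> (\<And>xs. length xs = k \<Longrightarrow> F xs = G xs) \<Longrightarrow> rfn p k G"
  unfolding rfn_def by simp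

lemma rfn_Zero: "rfn Zero k (\<lambda>_. 0)"
  unfolding rfn_def by (auto intro: eval.zero)

lemma rfn_Succ: "rfn Succ 1 (\<lambda>xs. Suc (xs ! 0))"
  unfolding rfn_def
proof (intro allI impI)
  fix xs :: "nat list" assume "length xs = 1"
  then obtain x where "xs = [x]" by (cases xs) auto
  then show "eval {} Succ xs (Suc (xs ! 0))" by (simp add: eval.succ)
qed

lemma rfn_Proj: "i < k \<Longrightarrow> rfn (Proj i) k (\<lambda>xs. xs ! i)"
  unfolding rfn_def by (auto intro: eval.proj)

lemma list_all2_rfn_eval:
  assumes "list_all2 (\<lambda>g G. rfn g k G) gs Gs" "length xs = k"
  shows "list_all2 (\<lambda>g y. eval {} g xs y) gs (map (\<lambda>G. G xs) Gs)"
  using assms(1)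
proof (induction rule: list_all2_induct)
  case Nil then show ?case by simp
next
  case (Cons g gs G Gs)
  then show ?case using assms(2) by (simp add: rfn_def)
qed

lemma rfn_Comp:
  assumes "rfn f (length gs) F" "list_all2 (\<lambda>g G. rfn g k G) gs Gs"
  shows "rfn (Comp f gs) k (\<lambda>xs. F (map (\<lambda>G. G xs) Gs))"
  unfolding rfn_def
proof (intro allI impI)
  fix xs :: "nat list" assume "length xs = k"
  from list_all2_rfn_eval[OF assms(2) this]
  have "list_all2 (\<lambda>g y. eval {} g xs y) gs (map (\<lambda>G. G xs) Gs)" .
  moreover have "length (map (\<lambda>G. G xs) Gs) = length gs"
    using assms(2) by (simp add: list_all2_lengthD)
  ultimately show "eval {} (Comp f gs) xs (F (map (\<lambda>G. G xs) Gs))"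
    using assms(1) unfolding rfn_def by (blast intro: eval.comp)
qed

lemma rfn_Comp1:
  "rfn f 1 F \<Longrightarrow> rfn g1 k G1 \<Longrightarrow> rfn (Comp f [g1]) k (\<lambda>xs. F [G1 xs])"
  using rfn_Comp[of f "[g1]" F k "[G1]"] by simp

lemma rfn_Comp2:
  "rfn f 2 F \<Longrightarrow> rfn g1 k G1 \<Longrightarrow> rfn g2 k G2 \<Longrightarrow> rfn (Comp f [g1, g2]) k (\<lambda>xs. F [G1 xs, G2 xs])"
  using rfn_Comp[of f "[g1, g2]" F k "[G1, G2]"] by (simp add: numeral_2_eq_2)

lemma rfn_Comp3:
  "rfn f 3 F \<Longrightarrow> rfn g1 k G1 \<Longrightarrow> rfn g2 k G2 \<Longrightarrow> rfn g3 k G3 \<Longrightarrow>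
   rfn (Comp f [g1, g2, g3]) k (\<lambda>xs. F [G1 xs, G2 xs, G3 xs])"
  using rfn_Comp[of f "[g1, g2, g3]" F k "[G1, G2, G3]"] by (simp add: numeral_3_eq_3)

fun pr :: "(nat list \<Rightarrow> nat) \<Rightarrow> (nat list \<Rightarrow> nat) \<Rightarrow> nat \<Rightarrow> nat list \<Rightarrow> nat" where
  "pr F G 0 ys = F ys"
| "pr F G (Suc n) ys = G (n # pr F G n ys # ys)"

lemma rfn_Prim:
  assumes "rfn f k F" "rfn g (Suc (Suc k)) G"
  shows "rfn (Prim f g) (Suc k) (\<lambda>xs. pr F G (hd xs) (tl xs))"
  unfolding rfn_def
proof (intro allI impI)
  fix xs :: "nat list" assume "length xs = Suc k"
  then obtain n ys where xs: "xs = n # ys" and ys: "length ys = k" by (cases xs) auto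
  have "eval {} (Prim f g) (n # ys) (pr F G n ys)"
  proof (induction n)
    case 0
    have "eval {} f ys (F ys)" using assms(1) ys unfolding rfn_def by blast
    then show ?case using eval.prim0 by simp
  next
    case (Suc n)
    have "eval {} g (n # pr F G n ys # ys) (G (n # pr F G n ys # ys))"
      using assms(2) ys unfolding rfn_def by simp
    from eval.primS[OF Suc.IH this] show ?case by simp
  qed
  then show "eval {} (Prim f g) xs (pr F G (hd xs) (tl xs))" using xs by simp
qed

lemma rfn_Mn:
  assumes "rfn f (Suc k) F" "\<And>xs. length xs = k \<Longrightarrow> \<exists>n. F (n # xs) = 0"
  shows "rfn (Mn f) k (\<lambda>xs. LEAST n. F (n # xs) = 0)"
  unfolding rfn_def
proof (intro allI impI)
  fix xs :: "nat list" assume len: "length xs = k"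
  let ?n = "LEAST n. F (n # xs) = 0"
  have z: "F (?n # xs) = 0" using assms(2)[OF len] by (rule LeastI_ex)
  have ev: "eval {} f (m # xs) (F (m # xs))" for m
    using assms(1) len unfolding rfn_def by simp
  have "\<forall>m<?n. \<exists>y. eval {} f (m # xs) y \<and> y \<noteq> 0"
  proof (intro allI impI)
    fix m assume "m < ?n"
    then have "F (m # xs) \<noteq> 0" by (rule not_less_Least)
    then show "\<exists>y. eval {} f (m # xs) y \<and> y \<noteq> 0" using ev by blast
  qed
  with ev[of ?n] z show "eval {} (Mn f) xs ?n" by (simp add: eval.mn)
qed

lemma map_Proj_rfn:
  assumes "d + m \<le> k"
  shows "list_all2 (\<lambda>g G. rfn g k G) (map (\<lambda>i. Proj (i + d)) [0..<m]) (map (\<lambda>i xs. xs ! (i + d)) [0..<m])"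
  using assms by (auto simp: list_all2_conv_all_nth intro!: rfn_Proj)

lemma map_nth_drop:
  assumes "length xs = d + m"
  shows "map (\<lambda>G. G xs) (map (\<lambda>i xs. xs ! (i + d)) [0..<m]) = drop d xs"
  using assms by (auto intro!: nth_equalityI simp: add.commute)

primrec cn :: "nat \<Rightarrow> recf" where
  "cn 0 = Zero"
| "cn (Suc n) = Comp Succ [cn n]"

lemma rfn_cn: "rfn (cn n) k (\<lambda>_. n)"
proof (induction n)
  case 0 then show ?case by (simp add: rfn_Zero)
next
  case (Suc n)
  have "rfn (Comp Succ [cn n]) k (\<lambda>xs. Suc ([n] ! 0))"
    by (rule rfn_Comp1[OF rfn_Succ Suc])
  then show ?case by simp
qed

lemma len1: "length xs = 1 \<Longrightarrow> xs = [xs ! 0]"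
  by (cases xs) auto
lemma len2: "length xs = 2 \<Longrightarrow> xs = [xs ! 0, xs ! 1]"
  by (cases xs; cases "tl xs") (auto simp: numeral_2_eq_2)
lemma len3: "length xs = 3 \<Longrightarrow> xs = [xs ! 0, xs ! 1, xs ! 2]"
  by (cases xs; cases "tl xs"; cases "tl (tl xs)") (auto simp: numeral_3_eq_3)

lemma rfn_cong1: assumes "rfn p 1 F" "\<And>a. F [a] = G [a]" shows "rfn p 1 G"
proof (rule rfn_cong[OF assms(1)])
  fix xs :: "nat list" assume "length xs = 1"
  then obtain a where "xs = [a]" using len1 by blast
  then show "F xs = G xs" by (simp add: assms(2))
qed
lemma rfn_cong2: assumes "rfn p 2 F" "\<And>a b. F [a, b] = G [a, b]" shows "rfn p 2 G"
proof (rule rfn_cong[OF assms(1)])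
  fix xs :: "nat list" assume "length xs = 2"
  then obtain a b where "xs = [a, b]" using len2 by blast
  then show "F xs = G xs" by (simp add: assms(2))
qed
lemma rfn_cong3: assumes "rfn p 3 F" "\<And>a b c. F [a, b, c] = G [a, b, c]" shows "rfn p 3 G"
proof (rule rfn_cong[OF assms(1)])
  fix xs :: "nat list" assume "length xs = 3"
  then obtain a b c where "xs = [a, b, c]" using len3 by blast
  then show "F xs = G xs" by (simp add: assms(2))
qed

lemma rfn_Prim':
  assumes "rfn f k F" "rfn g k2 G" "k2 = k + 2" "k1 = k + 1"
  shows "rfn (Prim f g) k1 (\<lambda>xs. pr F G (hd xs) (tl xs))"
  using rfn_Prim[of f k F g G] assms by simp

lemma rfn_Proj'': "i < k \<Longrightarrow> rfn (Proj i) k (\<lambda>xs. xs ! i)"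
  by (rule rfn_Proj)

definition "add_p = Prim (Proj 0) (Comp Succ [Proj 1])"

lemma rfn_add: "rfn add_p 2 (\<lambda>xs. xs ! 0 + xs ! 1)"
proof -
  have a: "rfn (Comp Succ [Proj 1]) 3 (\<lambda>xs. Suc (xs ! 1))"
    using rfn_Comp1[OF rfn_Succ rfn_Proj[of 1 3]] by simp
  have r: "rfn add_p 2 (\<lambda>xs. pr (\<lambda>ys. ys ! 0) (\<lambda>ys. Suc (ys ! 1)) (hd xs) (tl xs))"
    unfolding add_p_def by (rule rfn_Prim'[OF rfn_Proj[of 0 1, simplified] a]) simp_all
  have p: "pr (\<lambda>ys. ys ! 0) (\<lambda>ys. Suc (ys ! 1)) n ys = n + ys ! 0" for n ys
    by (induction n) auto
  show ?thesis
    by (rule rfn_cong2[OF r]) (simp add: p[simplified])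
qed

definition "mul_p = Prim Zero (Comp add_p [Proj 1, Proj 2])"

lemma rfn_mul: "rfn mul_p 2 (\<lambda>xs. xs ! 0 * xs ! 1)"
proof -
  have a: "rfn (Comp add_p [Proj 1, Proj 2]) 3 (\<lambda>xs. xs ! 1 + xs ! 2)"
    using rfn_Comp2[OF rfn_add rfn_Proj[of 1 3] rfn_Proj[of 2 3]] by simp
  have r: "rfn mul_p 2 (\<lambda>xs. pr (\<lambda>ys. 0) (\<lambda>ys. ys ! 1 + ys ! 2) (hd xs) (tl xs))"
    unfolding mul_p_def by (rule rfn_Prim'[OF rfn_Zero a]) simp_all
  have p: "pr (\<lambda>ys. 0) (\<lambda>ys. ys ! 1 + ys ! 2) n ys = n * ys ! 0" for n ys
    by (induction n) auto
  show ?thesis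
    by (rule rfn_cong2[OF r]) (simp add: p[simplified])
qed

definition "pred_p = Prim Zero (Proj 0)"

lemma rfn_pred: "rfn pred_p 1 (\<lambda>xs. xs ! 0 - 1)"
proof -
  have r: "rfn pred_p 1 (\<lambda>xs. pr (\<lambda>ys. 0) (\<lambda>ys. ys ! 0) (hd xs) (tl xs))"
    unfolding pred_p_def by (rule rfn_Prim'[OF rfn_Zero rfn_Proj]) simp_all
  have p: "pr (\<lambda>ys. 0) (\<lambda>ys. ys ! 0) n ys = n - 1" for n ys
    by (cases n) auto
  show ?thesis
    by (rule rfn_cong1[OF r]) (simp add: p[simplified])
qed

definition "tsub_p = Prim (Proj 0) (Comp pred_p [Proj 1])"

lemma rfn_tsub: "rfn tsub_p 2 (\<lambda>xs. xs ! 1 - xs ! 0)"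
proof -
  have a: "rfn (Comp pred_p [Proj 1]) 3 (\<lambda>xs. xs ! 1 - 1)"
    using rfn_Comp1[OF rfn_pred rfn_Proj[of 1 3]] by simp
  have r: "rfn tsub_p 2 (\<lambda>xs. pr (\<lambda>ys. ys ! 0) (\<lambda>ys. ys ! 1 - 1) (hd xs) (tl xs))"
    unfolding tsub_p_def by (rule rfn_Prim'[OF rfn_Proj[of 0 1, simplified] a]) simp_all
  have p: "pr (\<lambda>ys. ys ! 0) (\<lambda>ys. ys ! 1 - 1) n ys = ys ! 0 - n" for n ys
    by (induction n) auto
  show ?thesis
    by (rule rfn_cong2[OF r]) (simp add: p[simplified])
qed

definition "sg_p = Prim Zero (cn 1)"

lemma rfn_sg: "rfn sg_p 1 (\<lambda>xs. if xs ! 0 = 0 then 0 else 1)"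
proof -
  have r: "rfn sg_p 1 (\<lambda>xs. pr (\<lambda>ys. 0) (\<lambda>ys. 1) (hd xs) (tl xs))"
    unfolding sg_p_def by (rule rfn_Prim'[OF rfn_Zero rfn_cn]) simp_all
  have p: "pr (\<lambda>ys. 0) (\<lambda>ys. 1) n ys = (if n = 0 then 0 else 1)" for n ys
    by (cases n) auto
  show ?thesis
    by (rule rfn_cong1[OF r]) (simp add: p[simplified])
qed

definition "le_p = Comp tsub_p [Comp tsub_p [Proj 1, Proj 0], cn 1]"

lemma rfn_le: "rfn le_p 2 (\<lambda>xs. if xs ! 0 \<le> xs ! 1 then 1 else 0)"
proof -
  have a: "rfn (Comp tsub_p [Proj 1, Proj 0]) 2 (\<lambda>xs. xs ! 0 - xs ! 1)"
    using rfn_Comp2[OF rfn_tsub rfn_Proj[of 1 2] rfn_Proj[of 0 2]] by simp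
  have r: "rfn le_p 2 (\<lambda>xs. 1 - (xs ! 0 - xs ! 1))"
    unfolding le_p_def using rfn_Comp2[OF rfn_tsub a rfn_cn[of 1]] by simp
  show ?thesis by (rule rfn_cong[OF r]) auto
qed

definition "eq_p = Comp mul_p [le_p, Comp le_p [Proj 1, Proj 0]]"

lemma rfn_eq: "rfn eq_p 2 (\<lambda>xs. if xs ! 0 = xs ! 1 then 1 else 0)"
proof -
  have a: "rfn (Comp le_p [Proj 1, Proj 0]) 2 (\<lambda>xs. if xs ! 1 \<le> xs ! 0 then 1 else 0)"
    using rfn_Comp2[OF rfn_le rfn_Proj[of 1 2] rfn_Proj[of 0 2]] by simp
  have r: "rfn eq_p 2 (\<lambda>xs. (if xs ! 0 \<le> xs ! 1 then 1 else 0) * (if xs ! 1 \<le> xs ! 0 then 1 else 0))"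
    unfolding eq_p_def using rfn_Comp2[OF rfn_mul rfn_le a] by simp
  show ?thesis by (rule rfn_cong[OF r]) auto
qed

definition "pow2_p = Prim (cn 1) (Comp mul_p [Proj 1, cn 2])"

lemma rfn_pow2: "rfn pow2_p 1 (\<lambda>xs. 2 ^ (xs ! 0))"
proof -
  have a: "rfn (Comp mul_p [Proj 1, cn 2]) 2 (\<lambda>xs. xs ! 1 * 2)"
    using rfn_Comp2[OF rfn_mul rfn_Proj[of 1 2] rfn_cn[of 2]] by simp
  have r: "rfn pow2_p 1 (\<lambda>xs. pr (\<lambda>ys. 1) (\<lambda>ys. ys ! 1 * 2) (hd xs) (tl xs))"
    unfolding pow2_p_def by (rule rfn_Prim'[OF rfn_cn a]) simp_all
  have p: "pr (\<lambda>ys. 1) (\<lambda>ys. ys ! 1 * 2) n ys = 2 ^ n" for n ys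
    by (induction n) auto
  show ?thesis
    by (rule rfn_cong1[OF r]) (simp add: p[simplified])
qed

definition "mod_p = Prim Zero (Comp mul_p [Comp Succ [Proj 1],
   Comp tsub_p [Comp eq_p [Comp Succ [Proj 1], Proj 2], cn 1]])"

lemma rfn_mod: "rfn mod_p 2 (\<lambda>xs. xs ! 0 mod xs ! 1)"
proof -
  have s: "rfn (Comp Succ [Proj 1]) 3 (\<lambda>xs. Suc (xs ! 1))"
    using rfn_Comp1[OF rfn_Succ rfn_Proj[of 1 3]] by simp
  have e: "rfn (Comp eq_p [Comp Succ [Proj 1], Proj 2]) 3
       (\<lambda>xs. if Suc (xs ! 1) = xs ! 2 then 1 else 0)"
    using rfn_Comp2[OF rfn_eq s rfn_Proj[of 2 3]] by simp
  have t: "rfn (Comp tsub_p [Comp eq_p [Comp Succ [Proj 1], Proj 2], cn 1]) 3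
       (\<lambda>xs. if Suc (xs ! 1) = xs ! 2 then 0 else 1)"
    by (rule rfn_cong[OF rfn_Comp2[OF rfn_tsub e rfn_cn[of 1]]]) simp
  have a: "rfn (Comp mul_p [Comp Succ [Proj 1],
      Comp tsub_p [Comp eq_p [Comp Succ [Proj 1], Proj 2], cn 1]]) 3
       (\<lambda>xs. if Suc (xs ! 1) = xs ! 2 then 0 else Suc (xs ! 1))"
    by (rule rfn_cong[OF rfn_Comp2[OF rfn_mul s t]]) simp
  have r: "rfn mod_p 2 (\<lambda>xs. pr (\<lambda>ys. 0) (\<lambda>ys. if Suc (ys ! 1) = ys ! 2 then 0 else Suc (ys ! 1)) (hd xs) (tl xs))"
    unfolding mod_p_def by (rule rfn_Prim'[OF rfn_Zero a]) simp_all
  have p: "m > 0 \<Longrightarrow> pr (\<lambda>ys. 0) (\<lambda>ys. if Suc (ys ! 1) = ys ! 2 then 0 else Suc (ys ! 1)) n [m] = n mod m" for n m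
    by (induction n) (auto simp: mod_Suc)
  have p0: "pr (\<lambda>ys. 0) (\<lambda>ys. if Suc (ys ! 1) = ys ! 2 then 0 else Suc (ys ! 1)) n [0] = n" for n
    by (induction n) auto
  show ?thesis
    by (rule rfn_cong2[OF r]) (case_tac b; simp add: p[simplified] p0[simplified])
qed

lemma set_decode_mem: "(x \<in> set_decode c) = (2 ^ x \<le> c mod 2 ^ Suc x)"
proof -
  have "c mod (2 ^ x * 2) = 2 ^ x * (c div 2 ^ x mod 2) + c mod 2 ^ x"
    by (rule mod_mult2_eq)
  then have "c mod 2 ^ Suc x = 2 ^ x * (c div 2 ^ x mod 2) + c mod 2 ^ x"
    by (simp only: power_Suc2)
  moreover have r: "c mod 2 ^ x < 2 ^ x" by simp
  ultimately have e: "c mod 2 ^ Suc x = 2 ^ x * (c div 2 ^ x mod 2) + c mod 2 ^ x" by simp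
  show ?thesis
  proof (cases "odd (c div 2 ^ x)")
    case True
    then have "c div 2 ^ x mod 2 = 1" by (simp add: odd_iff_mod_2_eq_one)
    then have "2 ^ x \<le> c mod 2 ^ Suc x" using e by simp
    then show ?thesis using True unfolding set_decode_def by simp
  next
    case False
    then have "c div 2 ^ x mod 2 = 0" by (simp add: even_iff_mod_2_eq_zero)
    then have "c mod 2 ^ Suc x = c mod 2 ^ x" using e by simp
    then have "\<not> 2 ^ x \<le> c mod 2 ^ Suc x" using r by linarith
    then show ?thesis using False unfolding set_decode_def by simp
  qed
qed

definition "mem_p = Comp le_p [Comp pow2_p [Proj 0], Comp mod_p [Proj 1, Comp pow2_p [Comp Succ [Proj 0]]]]"

lemma rfn_mem: "rfn mem_p 2 (\<lambda>xs. if xs ! 0 \<in> set_decode (xs ! 1) then 1 else 0)"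
proof -
  have a: "rfn (Comp pow2_p [Proj 0]) 2 (\<lambda>xs. 2 ^ xs ! 0)"
    using rfn_Comp1[OF rfn_pow2 rfn_Proj[of 0 2]] by simp
  have b: "rfn (Comp pow2_p [Comp Succ [Proj 0]]) 2 (\<lambda>xs. 2 ^ Suc (xs ! 0))"
    using rfn_Comp1[OF rfn_pow2 rfn_Comp1[OF rfn_Succ rfn_Proj[of 0 2]]] by simp
  have c: "rfn (Comp mod_p [Proj 1, Comp pow2_p [Comp Succ [Proj 0]]]) 2 (\<lambda>xs. xs ! 1 mod 2 ^ Suc (xs ! 0))"
    using rfn_Comp2[OF rfn_mod rfn_Proj[of 1 2] b] by simp
  have r: "rfn mem_p 2 (\<lambda>xs. if 2 ^ xs ! 0 \<le> xs ! 1 mod 2 ^ Suc (xs ! 0) then 1 else 0)"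
    unfolding mem_p_def using rfn_Comp2[OF rfn_le a c] by simp
  show ?thesis by (rule rfn_cong[OF r]) (simp add: set_decode_mem)
qed



section \<open>Clocked semantics\<close>

fun pit :: "nat \<Rightarrow> (nat \<Rightarrow> nat \<Rightarrow> nat) \<Rightarrow> nat \<Rightarrow> nat" where
  "pit b st 0 = b"
| "pit b st (Suc m) = (if pit b st m = 0 then 0 else st m (pit b st m - 1))"

fun mst :: "(nat \<Rightarrow> nat) \<Rightarrow> nat \<Rightarrow> nat" where
  "mst F 0 = 0"
| "mst F (Suc t) = (if mst F t \<noteq> 0 then mst F t else if F t = 0 then 1 else if F t = 1 then t + 2 else 0)"

primrec fc :: "recf \<Rightarrow> nat \<Rightarrow> nat set \<Rightarrow> nat list \<Rightarrow> nat" where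
  "fc Zero = (\<lambda>s X xs. 1)"
| "fc Succ = (\<lambda>s X xs. case xs of [x] \<Rightarrow> x + 2 | _ \<Rightarrow> 0)"
| "fc (Proj i) = (\<lambda>s X xs. if i < length xs then Suc (xs ! i) else 0)"
| "fc Orc = (\<lambda>s X xs. case xs of [x] \<Rightarrow> (if x \<in> X then 2 else 1) | _ \<Rightarrow> 0)"
| "fc (Comp f gs) = (\<lambda>s X xs. if 0 \<in> set (map (\<lambda>h. h s X xs) (map fc gs)) then 0
      else fc f s X (map (\<lambda>r. r - 1) (map (\<lambda>h. h s X xs) (map fc gs))))"
| "fc (Prim f g) = (\<lambda>s X xs. case xs of [] \<Rightarrow> 0 | n # ys \<Rightarrow> pit (fc f s X ys) (\<lambda>m r. fc g s X (m # r # ys)) n)"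
| "fc (Mn f) = (\<lambda>s X xs. mst (\<lambda>n. fc f s X (n # xs)) s - 1)"

lemma mst_result:
  "mst F s = Suc (Suc t) \<Longrightarrow> t < s \<and> F t = 1 \<and> (\<forall>m<t. F m \<ge> 2)"
proof (induction s)
  case 0 then show ?case by simp
next
  case (Suc s)
  show ?case
  proof (cases "mst F s \<noteq> 0")
    case True
    then show ?thesis using Suc by auto
  next
    case False
    then have z: "mst F s = 0" by simp
    have allm: "\<forall>m<s. F m \<ge> 2" if "mst F s = 0" for s
      using that
    proof (induction s)
      case 0 then show ?case by simp
    next
      case (Suc s)
      then have "mst F s = 0" by (auto split: if_splits)
      with Suc show ?case by (auto split: if_splits simp: less_Suc_eq)
    qed
    from Suc.prems z have "F s = 1" "t = s" by (auto split: if_splits)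
    with allm[OF z] show ?thesis by simp
  qed
qed

lemma mst_zero: "\<forall>m<t. F m \<ge> 2 \<Longrightarrow> mst F t = 0"
  by (induction t) auto

lemma mst_found: "\<forall>m<n. F m \<ge> 2 \<Longrightarrow> F n = 1 \<Longrightarrow> n < s \<Longrightarrow> mst F s = Suc (Suc n)"
proof (induction s)
  case 0 then show ?case by simp
next
  case (Suc s)
  show ?case
  proof (cases "n < s")
    case True then show ?thesis using Suc by simp
  next
    case False
    then have "n = s" using Suc.prems by simp
    then show ?thesis using Suc.prems mst_zero[of n F] by simp
  qed
qed

lemma eval_orc1: "x \<in> X \<Longrightarrow> eval X Orc [x] (Suc 0)"
  using eval.orc[of X x] by simp
lemma eval_orc0: "x \<notin> X \<Longrightarrow> eval X Orc [x] 0"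
  using eval.orc[of X x] by simp

lemma fc_sound: "fc p s X xs = Suc y \<Longrightarrow> eval X p xs y"
proof (induction p arbitrary: xs y)
  case Zero then show ?case by (auto intro: eval.zero)
next
  case Succ then show ?case by (auto split: list.splits intro: eval.succ)
next
  case (Proj i) then show ?case by (auto split: if_splits intro: eval.proj)
next
  case Orc then show ?case
    by (auto split: list.splits if_splits intro: eval_orc1 eval_orc0)
next
  case (Comp f gs)
  let ?rs = "map (\<lambda>g. fc g s X xs) gs"
  have rs: "map (\<lambda>h. h s X xs) (map fc gs) = ?rs" by simp
  from Comp.prems have P: "(if 0 \<in> set ?rs then 0 else fc f s X (map (\<lambda>r. r - 1) ?rs)) = Suc y"
    by (simp only: fc.simps rs)
  have nz: "0 \<notin> set ?rs"
  proof
    assume a: "0 \<in> set ?rs"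
    from P have "0 = Suc y" by (simp only: if_P[OF a])
    then show False by simp
  qed
  from P have ff: "fc f s X (map (\<lambda>r. r - 1) ?rs) = Suc y" by (simp only: if_not_P[OF nz])
  have "list_all2 (\<lambda>g y. eval X g xs y) gs (map (\<lambda>r. r - 1) ?rs)"
  proof (rule list_all2_all_nthI)
    show "length gs = length (map (\<lambda>r. r - 1) ?rs)" by simp
  next
    fix i assume i: "i < length gs"
    have "?rs ! i \<in> set ?rs" using i by simp
    moreover have "?rs ! i = fc (gs ! i) s X xs" using i by simp
    ultimately have "fc (gs ! i) s X xs \<noteq> 0" using nz by metis
    then have "fc (gs ! i) s X xs = Suc (fc (gs ! i) s X xs - 1)" by simp
    from Comp.IH(2)[OF nth_mem[OF i] this]
    have "eval X (gs ! i) xs (fc (gs ! i) s X xs - 1)" .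
    then show "eval X (gs ! i) xs (map (\<lambda>r. r - 1) ?rs ! i)" using i by simp
  qed
  moreover have "eval X f (map (\<lambda>r. r - 1) ?rs) y" using Comp.IH(1)[OF ff] .
  ultimately show ?case by (rule eval.comp)
next
  case (Prim f g)
  from Prim.prems obtain n ys where xs: "xs = n # ys"
    and pp: "pit (fc f s X ys) (\<lambda>m r. fc g s X (m # r # ys)) n = Suc y"
    by (auto split: list.splits)
  have "pit (fc f s X ys) (\<lambda>m r. fc g s X (m # r # ys)) n = Suc y \<Longrightarrow> eval X (Prim f g) (n # ys) y" for y
  proof (induction n arbitrary: y)
    case 0 then show ?case using Prim.IH(1) by (auto intro: eval.prim0)
  next
    case (Suc n)
    let ?r = "pit (fc f s X ys) (\<lambda>m r. fc g s X (m # r # ys)) n"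
    from Suc.prems have nz: "?r \<noteq> 0" and gg: "fc g s X (n # (?r - 1) # ys) = Suc y"
      by (auto split: if_splits)
    from nz have "?r = Suc (?r - 1)" by simp
    then have "eval X (Prim f g) (n # ys) (?r - 1)" using Suc.IH by blast
    moreover have "eval X g (n # (?r - 1) # ys) y" using Prim.IH(2) gg by blast
    ultimately show ?case by (rule eval.primS)
  qed
  with pp xs show ?case by simp
next
  case (Mn f)
  let ?F = "\<lambda>n. fc f s X (n # xs)"
  from Mn.prems have "mst ?F s = Suc (Suc y)" by simp
  from mst_result[OF this] have a: "?F y = 1" and b: "\<forall>m<y. ?F m \<ge> 2" by auto
  have "eval X f (y # xs) 0" using a Mn.IH by (simp add: One_nat_def)
  moreover have "\<forall>m<y. \<exists>z. eval X f (m # xs) z \<and> z \<noteq> 0"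
  proof (intro allI impI)
    fix m assume "m < y"
    with b have "?F m \<ge> 2" by blast
    then have "?F m = Suc (?F m - 1)" "?F m - 1 \<noteq> 0" by auto
    then show "\<exists>z. eval X f (m # xs) z \<and> z \<noteq> 0" using Mn.IH by blast
  qed
  ultimately show ?case by (rule eval.mn)
qed

lemma list_all2_fc:
  assumes "list_all2 (\<lambda>g y. \<exists>s0. \<forall>s\<ge>s0. fc g s X xs = Suc y) gs ys"
  shows "\<exists>s0. \<forall>s\<ge>s0. map (\<lambda>g. fc g s X xs) gs = map Suc ys"
  using assms
proof (induction rule: list_all2_induct)
  case Nil then show ?case by simp
next
  case (Cons g gs y ys)
  then obtain s1 s2 where "\<forall>s\<ge>s1. fc g s X xs = Suc y"
    "\<forall>s\<ge>s2. map (\<lambda>g. fc g s X xs) gs = map Suc ys" by blast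
  then show ?case by (intro exI[of _ "max s1 s2"]) simp
qed

lemma fc_complete: "eval X p xs y \<Longrightarrow> \<exists>s0. \<forall>s\<ge>s0. fc p s X xs = Suc y"
proof (induction rule: eval.induct)
  case (zero xs) then show ?case by simp
next
  case (succ x) then show ?case by simp
next
  case (proj i xs) then show ?case by simp
next
  case (orc x) then show ?case by simp
next
  case (comp xs gs ys f z)
  have "list_all2 (\<lambda>g y. \<exists>s0. \<forall>s\<ge>s0. fc g s X xs = Suc y) gs ys"
    using comp(1) by (rule list_all2_mono) blast
  from list_all2_fc[OF this] obtain s1 where s1: "\<forall>s\<ge>s1. map (\<lambda>g. fc g s X xs) gs = map Suc ys"
    by blast
  from comp.IH obtain s2 where s2: "\<forall>s\<ge>s2. fc f s X ys = Suc z" by blast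
  show ?case
  proof (intro exI allI impI)
    fix s assume "max s1 s2 \<le> s"
    then have a: "map (\<lambda>g. fc g s X xs) gs = map Suc ys" and b: "fc f s X ys = Suc z"
      using s1 s2 by auto
    have c: "map (\<lambda>h. h s X xs) (map fc gs) = map Suc ys" using a by (simp add: comp_def)
    have d: "0 \<notin> set (map Suc ys)" by auto
    have e: "map (\<lambda>r. r - 1) (map Suc ys) = ys" by (simp add: comp_def)
    show "fc (Comp f gs) s X xs = Suc z"
      by (simp only: fc.simps c if_not_P[OF d] e b)
  qed
next
  case (prim0 f xs z g) then show ?case by simp
next
  case (primS f g n xs r z)
  then obtain s1 s2 where s1: "\<forall>s\<ge>s1. fc (Prim f g) s X (n # xs) = Suc r"
    and s2: "\<forall>s\<ge>s2. fc g s X (n # r # xs) = Suc z" by blast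
  show ?case
  proof (intro exI allI impI)
    fix s assume "max s1 s2 \<le> s"
    then have a: "pit (fc f s X xs) (\<lambda>m r. fc g s X (m # r # xs)) n = Suc r"
      and b: "fc g s X (n # r # xs) = Suc z"
      using s1 s2 by auto
    then show "fc (Prim f g) s X (Suc n # xs) = Suc z" by simp
  qed
next
  case (mn f n xs)
  from mn.IH(1) obtain w2 where w2: "\<forall>s\<ge>w2. fc f s X (n # xs) = Suc 0" by blast
  have "\<forall>m<n. \<exists>w. \<exists>y. y \<noteq> 0 \<and> (\<forall>s\<ge>w. fc f s X (m # xs) = Suc y)"
    using mn(3) by blast
  from bounded_choice[OF this] obtain w1 where
    w1: "\<forall>m<n. \<exists>y. y \<noteq> 0 \<and> (\<forall>s\<ge>w1. fc f s X (m # xs) = Suc y)"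
    by (metis (no_types, lifting) order_trans)
  show ?case
  proof (intro exI allI impI)
    fix s assume s: "max (max w1 w2) (Suc n) \<le> s"
    let ?F = "\<lambda>m. fc f s X (m # xs)"
    have "\<forall>m<n. ?F m \<ge> 2"
    proof (intro allI impI)
      fix m assume "m < n"
      with w1 obtain y where "y \<noteq> 0" "\<forall>s\<ge>w1. fc f s X (m # xs) = Suc y" by blast
      with s show "?F m \<ge> 2" by auto
    qed
    moreover have "?F n = 1" using w2 s by auto
    moreover have "n < s" using s by auto
    ultimately have "mst ?F s = Suc (Suc n)" by (rule mst_found)
    then show "fc (Mn f) s X xs = Suc n" by simp
  qed
qed



section \<open>Compiling the clocked semantics\<close>

primrec allnz :: "recf list \<Rightarrow> recf" where
  "allnz [] = cn 1"
| "allnz (G # Gs) = Comp mul_p [Comp sg_p [G], allnz Gs]"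

lemma rfn_allnz:
  assumes "list_all2 (\<lambda>g G. rfn g k G) Gs Fs"
  shows "rfn (allnz Gs) k (\<lambda>xs. if \<forall>F\<in>set Fs. F xs \<noteq> 0 then 1 else 0)"
  using assms
proof (induction rule: list_all2_induct)
  case Nil then show ?case using rfn_cn[of 1 k] by simp
next
  case (Cons G Gs F Fs)
  have "rfn (Comp sg_p [G]) k (\<lambda>xs. if F xs = 0 then 0 else 1)"
    using rfn_Comp1[OF rfn_sg Cons(1)] by simp
  from rfn_Comp2[OF rfn_mul this Cons(3)]
  have r: "rfn (allnz (G # Gs)) k (\<lambda>xs. (if F xs = 0 then 0 else 1) * (if \<forall>F\<in>set Fs. F xs \<noteq> 0 then 1 else 0))"
    by simp
  show ?case by (rule rfn_cong[OF r]) simp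
qed

lemma list_all2_pred:
  assumes "list_all2 (\<lambda>g G. rfn g k G) Gs Fs"
  shows "list_all2 (\<lambda>g G. rfn g k G) (map (\<lambda>G. Comp pred_p [G]) Gs) (map (\<lambda>F xs. F xs - 1) Fs)"
  using assms
proof (induction rule: list_all2_induct)
  case Nil then show ?case by simp
next
  case (Cons G Gs F Fs)
  then show ?case using rfn_Comp1[OF rfn_pred Cons(1)] by simp
qed

lemma map_take_drop:
  assumes "d + m \<le> length xs"
  shows "map (\<lambda>G. G xs) (map (\<lambda>i xs. xs ! (i + d)) [0..<m]) = take m (drop d xs)"
  using assms by (auto intro!: nth_equalityI simp: add.commute)

definition "step_tr g k = Comp mul_p [Comp sg_p [Proj 1],
   Comp (g) (Proj 0 # Comp pred_p [Proj 1] # map (\<lambda>i. Proj (i + 2)) [0..<Suc k])]"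

definition "mstep_tr f k = Comp add_p [Proj 1, Comp mul_p [Comp eq_p [Proj 1, cn 0],
   Comp add_p [Comp eq_p [Comp f (Proj 0 # map (\<lambda>i. Proj (i + 2)) [0..<k + 2]), cn 0],
     Comp mul_p [Comp eq_p [Comp f (Proj 0 # map (\<lambda>i. Proj (i + 2)) [0..<k + 2]), cn 1],
                 Comp Succ [Comp Succ [Proj 0]]]]]]"

lemma rfn_step_tr:
  assumes "rfn G (k + 3) SG"
  shows "rfn (step_tr G k) (k + 3) (\<lambda>zs. if zs ! 1 = 0 then 0 else SG (zs ! 0 # (zs ! 1 - 1) # drop 2 zs))"
proof -
  have a: "rfn (Comp sg_p [Proj 1]) (k + 3) (\<lambda>zs. if zs ! 1 = 0 then 0 else 1)"
    using rfn_Comp1[OF rfn_sg rfn_Proj[of 1 "k + 3"]] by simp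
  have p: "rfn (Comp pred_p [Proj 1]) (k + 3) (\<lambda>zs. zs ! 1 - 1)"
    using rfn_Comp1[OF rfn_pred rfn_Proj[of 1 "k + 3"]] by simp
  have l: "list_all2 (\<lambda>g G. rfn g (k + 3) G) (Proj 0 # Comp pred_p [Proj 1] # map (\<lambda>i. Proj (i + 2)) [0..<Suc k])
     ((\<lambda>zs. zs ! 0) # (\<lambda>zs. zs ! 1 - 1) # map (\<lambda>i xs. xs ! (i + 2)) [0..<Suc k])"
    using map_Proj_rfn[of 2 "Suc k" "k + 3"] p rfn_Proj[of 0 "k + 3"] by simp
  have len: "length (Proj 0 # Comp pred_p [Proj 1] # map (\<lambda>i. Proj (i + 2)) [0..<Suc k]) = k + 3" by simp
  have b: "rfn (Comp G (Proj 0 # Comp pred_p [Proj 1] # map (\<lambda>i. Proj (i + 2)) [0..<Suc k])) (k + 3)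
     (\<lambda>zs. SG (map (\<lambda>G. G zs) ((\<lambda>zs. zs ! 0) # (\<lambda>zs. zs ! 1 - 1) # map (\<lambda>i xs. xs ! (i + 2)) [0..<Suc k])))"
    by (rule rfn_Comp[OF _ l]) (simp only: len assms)
  have c: "rfn (step_tr G k) (k + 3) (\<lambda>zs. (if zs ! 1 = 0 then 0 else 1) *
     SG (map (\<lambda>G. G zs) ((\<lambda>zs. zs ! 0) # (\<lambda>zs. zs ! 1 - 1) # map (\<lambda>i xs. xs ! (i + 2)) [0..<Suc k])))"
    unfolding step_tr_def using rfn_Comp2[OF rfn_mul a b] by simp
  show ?thesis
  proof (rule rfn_cong[OF c])
    fix zs :: "nat list" assume lz: "length zs = k + 3"
    have "map (\<lambda>G. G zs) (map (\<lambda>i xs. xs ! (i + 2)) [0..<Suc k]) = take (Suc k) (drop 2 zs)"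
      by (rule map_take_drop) (use lz in simp)
    also have "\<dots> = drop 2 zs" using lz by simp
    finally show "(if zs ! 1 = 0 then 0 else 1) *
     SG (map (\<lambda>G. G zs) ((\<lambda>zs. zs ! 0) # (\<lambda>zs. zs ! 1 - 1) # map (\<lambda>i xs. xs ! (i + 2)) [0..<Suc k])) =
     (if zs ! 1 = 0 then 0 else SG (zs ! 0 # (zs ! 1 - 1) # drop 2 zs))" by simp
  qed
qed

lemma rfn_mstep_tr:
  assumes "rfn G (k + 3) SG"
  shows "rfn (mstep_tr G k) (k + 4) (\<lambda>zs. zs ! 1 + (if zs ! 1 = 0 then 1 else 0) *
     ((if SG (zs ! 0 # drop 2 zs) = 0 then 1 else 0) +
      (if SG (zs ! 0 # drop 2 zs) = 1 then 1 else 0) * Suc (Suc (zs ! 0))))"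
proof -
  have l: "list_all2 (\<lambda>g G. rfn g (k + 4) G) (Proj 0 # map (\<lambda>i. Proj (i + 2)) [0..<k + 2])
     ((\<lambda>zs. zs ! 0) # map (\<lambda>i xs. xs ! (i + 2)) [0..<k + 2])"
    using map_Proj_rfn[of 2 "k + 2" "k + 4"] rfn_Proj[of 0 "k + 4"] by simp
  have len: "length (Proj 0 # map (\<lambda>i. Proj (i + 2)) [0..<k + 2]) = k + 3" by simp
  have o: "rfn (Comp G (Proj 0 # map (\<lambda>i. Proj (i + 2)) [0..<k + 2])) (k + 4)
     (\<lambda>zs. SG (map (\<lambda>G. G zs) ((\<lambda>zs. zs ! 0) # map (\<lambda>i xs. xs ! (i + 2)) [0..<k + 2])))"
    by (rule rfn_Comp[OF _ l]) (simp only: len assms)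
  have o': "rfn (Comp G (Proj 0 # map (\<lambda>i. Proj (i + 2)) [0..<k + 2])) (k + 4)
     (\<lambda>zs. SG (zs ! 0 # drop 2 zs))"
  proof (rule rfn_cong[OF o])
    fix zs :: "nat list" assume lz: "length zs = k + 4"
    have "map (\<lambda>G. G zs) (map (\<lambda>i xs. xs ! (i + 2)) [0..<k + 2]) = take (k + 2) (drop 2 zs)"
      by (rule map_take_drop) (use lz in simp)
    also have "\<dots> = drop 2 zs" using lz by simp
    finally show "SG (map (\<lambda>G. G zs) ((\<lambda>zs. zs ! 0) # map (\<lambda>i xs. xs ! (i + 2)) [0..<k + 2])) =
      SG (zs ! 0 # drop 2 zs)" by simp
  qed
  have e0: "rfn (Comp eq_p [Comp G (Proj 0 # map (\<lambda>i. Proj (i + 2)) [0..<k + 2]), cn 0]) (k + 4)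
     (\<lambda>zs. if SG (zs ! 0 # drop 2 zs) = 0 then 1 else 0)"
    using rfn_Comp2[OF rfn_eq o' rfn_cn[of 0]] by simp
  have e1: "rfn (Comp eq_p [Comp G (Proj 0 # map (\<lambda>i. Proj (i + 2)) [0..<k + 2]), cn 1]) (k + 4)
     (\<lambda>zs. if SG (zs ! 0 # drop 2 zs) = 1 then 1 else 0)"
    using rfn_Comp2[OF rfn_eq o' rfn_cn[of 1]] by simp
  have s2: "rfn (Comp Succ [Comp Succ [Proj 0]]) (k + 4) (\<lambda>zs. Suc (Suc (zs ! 0)))"
    using rfn_Comp1[OF rfn_Succ rfn_Comp1[OF rfn_Succ rfn_Proj[of 0 "k + 4"]]] by simp
  have m: "rfn (Comp mul_p [Comp eq_p [Comp G (Proj 0 # map (\<lambda>i. Proj (i + 2)) [0..<k + 2]), cn 1],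
                 Comp Succ [Comp Succ [Proj 0]]]) (k + 4)
     (\<lambda>zs. (if SG (zs ! 0 # drop 2 zs) = 1 then 1 else 0) * Suc (Suc (zs ! 0)))"
    using rfn_Comp2[OF rfn_mul e1 s2] by simp
  have a: "rfn (Comp add_p [Comp eq_p [Comp G (Proj 0 # map (\<lambda>i. Proj (i + 2)) [0..<k + 2]), cn 0],
     Comp mul_p [Comp eq_p [Comp G (Proj 0 # map (\<lambda>i. Proj (i + 2)) [0..<k + 2]), cn 1],
                 Comp Succ [Comp Succ [Proj 0]]]]) (k + 4)
     (\<lambda>zs. (if SG (zs ! 0 # drop 2 zs) = 0 then 1 else 0) +
      (if SG (zs ! 0 # drop 2 zs) = 1 then 1 else 0) * Suc (Suc (zs ! 0)))"
    using rfn_Comp2[OF rfn_add e0 m] by simp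
  have z: "rfn (Comp eq_p [Proj 1, cn 0]) (k + 4) (\<lambda>zs. if zs ! 1 = 0 then 1 else 0)"
    using rfn_Comp2[OF rfn_eq rfn_Proj[of 1 "k + 4"] rfn_cn[of 0]] by simp
  have b: "rfn (Comp mul_p [Comp eq_p [Proj 1, cn 0],
   Comp add_p [Comp eq_p [Comp G (Proj 0 # map (\<lambda>i. Proj (i + 2)) [0..<k + 2]), cn 0],
     Comp mul_p [Comp eq_p [Comp G (Proj 0 # map (\<lambda>i. Proj (i + 2)) [0..<k + 2]), cn 1],
                 Comp Succ [Comp Succ [Proj 0]]]]]) (k + 4)
     (\<lambda>zs. (if zs ! 1 = 0 then 1 else 0) * ((if SG (zs ! 0 # drop 2 zs) = 0 then 1 else 0) +
      (if SG (zs ! 0 # drop 2 zs) = 1 then 1 else 0) * Suc (Suc (zs ! 0))))"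
    using rfn_Comp2[OF rfn_mul z a] by simp
  show ?thesis unfolding mstep_tr_def
    using rfn_Comp2[OF rfn_add rfn_Proj[of 1 "k + 4"] b] by simp
qed

primrec tr :: "recf \<Rightarrow> nat \<Rightarrow> recf" where
  "tr Zero = (\<lambda>k. cn 1)"
| "tr Succ = (\<lambda>k. if k = 1 then Comp Succ [Comp Succ [Proj 0]] else Zero)"
| "tr (Proj i) = (\<lambda>k. if i < k then Comp Succ [Proj i] else Zero)"
| "tr Orc = (\<lambda>k. if k = 1 then Comp Succ [Comp mem_p [Proj 0, Proj 2]] else Zero)"
| "tr (Comp f gs) = (\<lambda>k. Comp mul_p [allnz (map (\<lambda>h. h k) (map tr gs)),
      Comp (tr f (length gs)) (map (\<lambda>G. Comp pred_p [G]) (map (\<lambda>h. h k) (map tr gs)) @ [Proj k, Proj (Suc k)])])"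
| "tr (Prim f g) = (\<lambda>k. if k = 0 then Zero else Prim (tr f (k - 1)) (step_tr (tr g (Suc k)) k))"
| "tr (Mn f) = (\<lambda>k. Comp pred_p [Comp (Prim Zero (mstep_tr (tr f (Suc k)) k)) (Proj k # map (\<lambda>i. Proj (i + 0)) [0..<k + 2])])"

lemma case_len_ne1: "length l \<noteq> 1 \<Longrightarrow> (case l of [x] \<Rightarrow> f x | _ \<Rightarrow> (0::nat)) = 0"
  by (cases l; cases "tl l") auto

definition sem :: "recf \<Rightarrow> nat \<Rightarrow> nat list \<Rightarrow> nat" where
  "sem p k ys = fc p (ys ! k) (set_decode (ys ! Suc k)) (take k ys)"

lemma tr_correct: "rfn (tr p k) (k + 2) (sem p k)"
proof (induction p arbitrary: k)
  case Zero
  show ?case unfolding sem_def using rfn_cn[of 1 "k+2"] by simp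
next
  case Succ
  show ?case
  proof (cases "k = 1")
    case True
    have r: "rfn (tr Succ k) (k + 2) (\<lambda>xs. Suc (Suc (xs ! 0)))"
      using rfn_Comp1[OF rfn_Succ rfn_Comp1[OF rfn_Succ rfn_Proj[of 0 3]]] True by (simp add: numeral_3_eq_3)
    show ?thesis unfolding sem_def
    proof (rule rfn_cong[OF r])
      fix xs :: "nat list" assume "length xs = k + 2"
      then have l3: "length xs = 3" using True by simp
      obtain a b c where "xs = [a, b, c]" using len3[OF l3] by blast
      then show "Suc (Suc (xs ! 0)) = fc Succ (xs ! k) (set_decode (xs ! Suc k)) (take k xs)"
        using True by simp
    qed
  next
    case False
    have z: "fc Succ s X (take k ys) = 0" if "length ys = k + 2" for s X ys
    proof -
      have "length (take k ys) \<noteq> 1" using that False by simp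
      then show ?thesis by (cases "take k ys" rule: remdups_adj.cases) auto
    qed
    have t: "tr Succ k = Zero" using False by simp
    show ?thesis unfolding sem_def t by (rule rfn_cong[OF rfn_Zero]) (rule z[symmetric], assumption)
  qed
next
  case (Proj i)
  show ?case
  proof (cases "i < k")
    case True
    have "rfn (Comp Succ [Proj i]) (k + 2) (\<lambda>xs. Suc (xs ! i))"
      using rfn_Comp1[OF rfn_Succ rfn_Proj[of i "k+2"]] True by simp
    then have r: "rfn (tr (Proj i) k) (k + 2) (\<lambda>xs. Suc (xs ! i))" using True by simp
    show ?thesis unfolding sem_def by (rule rfn_cong[OF r]) (use True in simp)
  next
    case False
    then have t: "tr (Proj i) k = Zero" by simp
    show ?thesis unfolding sem_def t by (rule rfn_cong[OF rfn_Zero]) (use False in simp)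
  qed
next
  case Orc
  show ?case
  proof (cases "k = 1")
    case True
    have r: "rfn (tr Orc k) (k + 2)
       (\<lambda>xs. Suc (if xs ! 0 \<in> set_decode (xs ! 2) then 1 else 0))"
      using rfn_Comp1[OF rfn_Succ rfn_Comp2[OF rfn_mem rfn_Proj[of 0 3] rfn_Proj[of 2 3]]] True by (simp add: numeral_3_eq_3)
    show ?thesis unfolding sem_def
    proof (rule rfn_cong[OF r])
      fix xs :: "nat list" assume "length xs = k + 2"
      then have l3: "length xs = 3" using True by simp
      obtain a b c where "xs = [a, b, c]" using len3[OF l3] by blast
      then show "Suc (if xs ! 0 \<in> set_decode (xs ! 2) then 1 else 0) = fc Orc (xs ! k) (set_decode (xs ! Suc k)) (take k xs)"
        using True by simp
    qed
  next
    case False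
    have z: "fc Orc s X (take k ys) = 0" if "length ys = k + 2" for s X ys
    proof -
      have "length (take k ys) \<noteq> 1" using that False by simp
      then show ?thesis by (cases "take k ys" rule: remdups_adj.cases) auto
    qed
    have t: "tr Orc k = Zero" using False by simp
    show ?thesis unfolding sem_def t by (rule rfn_cong[OF rfn_Zero]) (rule z[symmetric], assumption)
  qed
next
  case (Comp f gs)
  let ?Gs = "map (\<lambda>g. tr g k) gs"
  let ?Fs = "map (\<lambda>g. sem g k) gs"
  let ?m = "length gs"
  have L: "list_all2 (\<lambda>g G. rfn g (k + 2) G) ?Gs ?Fs"
    unfolding list_all2_conv_all_nth using Comp.IH(2) by simp
  have A: "rfn (allnz ?Gs) (k + 2) (\<lambda>xs. if \<forall>F\<in>set ?Fs. F xs \<noteq> 0 then 1 else 0)"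
    by (rule rfn_allnz[OF L])
  have Q: "list_all2 (\<lambda>g G. rfn g (k + 2) G) (map (\<lambda>G. Comp pred_p [G]) ?Gs @ [Proj k, Proj (Suc k)])
      (map (\<lambda>F xs. F xs - 1) ?Fs @ [\<lambda>xs. xs ! k, \<lambda>xs. xs ! Suc k])"
    by (rule list_all2_appendI[OF list_all2_pred[OF L]]) (simp add: rfn_Proj)
  have len: "length (map (\<lambda>G. Comp pred_p [G]) ?Gs @ [Proj k, Proj (Suc k)]) = ?m + 2" by simp
  have B: "rfn (Comp (tr f ?m) (map (\<lambda>G. Comp pred_p [G]) ?Gs @ [Proj k, Proj (Suc k)])) (k + 2)
     (\<lambda>xs. sem f ?m (map (\<lambda>G. G xs) (map (\<lambda>F xs. F xs - 1) ?Fs @ [\<lambda>xs. xs ! k, \<lambda>xs. xs ! Suc k])))"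
    by (rule rfn_Comp[OF _ Q]) (simp only: len Comp.IH(1))
  have C: "rfn (tr (Comp f gs) k) (k + 2) (\<lambda>xs. (if \<forall>F\<in>set ?Fs. F xs \<noteq> 0 then 1 else 0) *
     sem f ?m (map (\<lambda>G. G xs) (map (\<lambda>F xs. F xs - 1) ?Fs @ [\<lambda>xs. xs ! k, \<lambda>xs. xs ! Suc k])))"
    using rfn_Comp2[OF rfn_mul A B] by (simp add: comp_def)
  show ?case
  proof (rule rfn_cong[OF C])
    fix xs :: "nat list" assume lx: "length xs = k + 2"
    let ?V = "map (\<lambda>g. fc g (xs ! k) (set_decode (xs ! Suc k)) (take k xs)) gs"
    have e1: "map (\<lambda>G. G xs) (map (\<lambda>F xs. F xs - 1) ?Fs @ [\<lambda>xs. xs ! k, \<lambda>xs. xs ! Suc k])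
        = map (\<lambda>r. r - 1) ?V @ [xs ! k, xs ! Suc k]" by (simp add: sem_def)
    have e2: "sem f ?m (map (\<lambda>r. r - 1) ?V @ [xs ! k, xs ! Suc k])
        = fc f (xs ! k) (set_decode (xs ! Suc k)) (map (\<lambda>r. r - 1) ?V)"
      unfolding sem_def by (simp add: nth_append)
    have e3: "(\<forall>F\<in>set ?Fs. F xs \<noteq> 0) = (0 \<notin> set ?V)" by (auto simp: sem_def)
    show "(if \<forall>F\<in>set ?Fs. F xs \<noteq> 0 then 1 else 0) *
     sem f ?m (map (\<lambda>G. G xs) (map (\<lambda>F xs. F xs - 1) ?Fs @ [\<lambda>xs. xs ! k, \<lambda>xs. xs ! Suc k]))
     = sem (Comp f gs) k xs"
      unfolding e1 e2 e3 by (simp add: sem_def comp_def)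
  qed
next
  case (Prim f g)
  show ?case
  proof (cases k)
    case 0
    have t: "tr (Prim f g) k = Zero" using 0 by simp
    show ?thesis unfolding t sem_def by (rule rfn_cong[OF rfn_Zero]) (simp add: 0)
  next
    case (Suc j)
    have t: "tr (Prim f g) k = Prim (tr f j) (step_tr (tr g (Suc k)) k)" using Suc by simp
    let ?SF = "\<lambda>zs. if zs ! 1 = 0 then 0 else sem g (Suc k) (zs ! 0 # (zs ! 1 - 1) # drop 2 zs)"
    have st: "rfn (step_tr (tr g (Suc k)) k) (k + 3) ?SF"
      by (rule rfn_step_tr) (use Prim.IH(2)[of "Suc k"] in \<open>simp add: numeral_3_eq_3\<close>)
    have r: "rfn (tr (Prim f g) k) (k + 2) (\<lambda>xs. pr (sem f j) ?SF (hd xs) (tl xs))"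
      unfolding t by (rule rfn_Prim'[OF Prim.IH(1)[of j] st]) (simp_all add: Suc)
    show ?thesis
    proof (rule rfn_cong[OF r])
      fix xs :: "nat list" assume lx: "length xs = k + 2"
      then obtain n ys where xs: "xs = n # ys" and ly: "length ys = j + 2" using Suc by (cases xs) auto
      let ?s = "ys ! j" and ?X = "set_decode (ys ! Suc j)"
      have "pr (sem f j) ?SF n ys = pit (fc f ?s ?X (take j ys)) (\<lambda>m r. fc g ?s ?X (m # r # take j ys)) n"
      proof (induction n)
        case 0 then show ?case by (simp add: sem_def)
      next
        case (Suc n) then show ?case using ly \<open>k = Suc j\<close> by (simp add: sem_def)
      qed
      moreover have "sem (Prim f g) k xs = pit (fc f ?s ?X (take j ys)) (\<lambda>m r. fc g ?s ?X (m # r # take j ys)) n"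
        unfolding sem_def using xs Suc by simp
      ultimately show "pr (sem f j) ?SF (hd xs) (tl xs) = sem (Prim f g) k xs" using xs by simp
    qed
  qed
next
  case (Mn f)
  let ?MS = "\<lambda>zs. zs ! 1 + (if zs ! 1 = 0 then 1 else 0) *
     ((if sem f (Suc k) (zs ! 0 # drop 2 zs) = 0 then 1 else 0) +
      (if sem f (Suc k) (zs ! 0 # drop 2 zs) = 1 then 1 else 0) * Suc (Suc (zs ! 0)))"
  have ms: "rfn (mstep_tr (tr f (Suc k)) k) (k + 4) ?MS"
    by (rule rfn_mstep_tr) (use Mn.IH[of "Suc k"] in \<open>simp add: numeral_3_eq_3\<close>)
  have M: "rfn (Prim Zero (mstep_tr (tr f (Suc k)) k)) (k + 3) (\<lambda>xs. pr (\<lambda>_. 0) ?MS (hd xs) (tl xs))"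
    by (rule rfn_Prim'[OF rfn_Zero ms]) simp_all
  have l: "list_all2 (\<lambda>g G. rfn g (k + 2) G) (Proj k # map (\<lambda>i. Proj (i + 0)) [0..<k + 2])
     ((\<lambda>xs. xs ! k) # map (\<lambda>i xs. xs ! (i + 0)) [0..<k + 2])"
    using map_Proj_rfn[of 0 "k + 2" "k + 2"] rfn_Proj[of k "k + 2"] by simp
  have len: "length (Proj k # map (\<lambda>i. Proj (i + 0)) [0..<k + 2]) = k + 3" by simp
  have c: "rfn (Comp (Prim Zero (mstep_tr (tr f (Suc k)) k)) (Proj k # map (\<lambda>i. Proj (i + 0)) [0..<k + 2])) (k + 2)
    (\<lambda>xs. (\<lambda>xs. pr (\<lambda>_. 0) ?MS (hd xs) (tl xs)) (map (\<lambda>G. G xs) ((\<lambda>xs. xs ! k) # map (\<lambda>i xs. xs ! (i + 0)) [0..<k + 2])))"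
    by (rule rfn_Comp[OF _ l]) (simp only: len M)
  have c': "rfn (Comp (Prim Zero (mstep_tr (tr f (Suc k)) k)) (Proj k # map (\<lambda>i. Proj (i + 0)) [0..<k + 2])) (k + 2)
    (\<lambda>xs. pr (\<lambda>_. 0) ?MS (xs ! k) xs)"
  proof (rule rfn_cong[OF c])
    fix xs :: "nat list" assume lx: "length xs = k + 2"
    have "map (\<lambda>G. G xs) (map (\<lambda>i xs. xs ! (i + 0)) [0..<k + 2]) = take (k + 2) (drop 0 xs)"
      by (rule map_take_drop) (use lx in simp)
    also have "\<dots> = xs" using lx by simp
    finally show "(\<lambda>xs. pr (\<lambda>_. 0) ?MS (hd xs) (tl xs)) (map (\<lambda>G. G xs) ((\<lambda>xs. xs ! k) # map (\<lambda>i xs. xs ! (i + 0)) [0..<k + 2]))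
       = pr (\<lambda>_. 0) ?MS (xs ! k) xs" by simp
  qed
  have r: "rfn (tr (Mn f) k) (k + 2) (\<lambda>xs. pr (\<lambda>_. 0) ?MS (xs ! k) xs - 1)"
    using rfn_Comp1[OF rfn_pred c'] by simp
  show ?case
  proof (rule rfn_cong[OF r])
    fix xs :: "nat list" assume lx: "length xs = k + 2"
    let ?F = "\<lambda>n. fc f (xs ! k) (set_decode (xs ! Suc k)) (n # take k xs)"
    have sf: "sem f (Suc k) (t # xs) = ?F t" for t
      unfolding sem_def by simp
    have "pr (\<lambda>_. 0) ?MS t xs = mst ?F t" for t
    proof (induction t)
      case 0 then show ?case by simp
    next
      case (Suc t)
      have d: "drop 2 (t # r # xs) = xs" for r by simp
      show ?case using Suc by (simp add: d sf)
    qed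
    then show "pr (\<lambda>_. 0) ?MS (xs ! k) xs - 1 = sem (Mn f) k xs"
      unfolding sem_def by simp
  qed
qed



definition "bex_p P k = Comp sg_p [Prim (Comp P (cn 0 # map (\<lambda>i. Proj (i + 0)) [0..<k]))
   (Comp add_p [Proj 1, Comp P (Comp Succ [Proj 0] # map (\<lambda>i. Proj (i + 2)) [0..<k])])]"

lemma rfn_bex:
  assumes P: "rfn P (Suc k) Pf"
  shows "rfn (bex_p P k) (Suc k) (\<lambda>xs. if \<exists>i\<le>hd xs. Pf (i # tl xs) \<noteq> 0 then 1 else 0)"
proof -
  have l0: "list_all2 (\<lambda>g G. rfn g k G) (cn 0 # map (\<lambda>i. Proj (i + 0)) [0..<k])
     ((\<lambda>_. 0) # map (\<lambda>i xs. xs ! (i + 0)) [0..<k])"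
    using map_Proj_rfn[of 0 k k] rfn_cn[of 0 k] by simp
  have b: "rfn (Comp P (cn 0 # map (\<lambda>i. Proj (i + 0)) [0..<k])) k
      (\<lambda>xs. Pf (map (\<lambda>G. G xs) ((\<lambda>_. 0) # map (\<lambda>i xs. xs ! (i + 0)) [0..<k])))"
    by (rule rfn_Comp[OF _ l0]) (simp add: P)
  have b': "rfn (Comp P (cn 0 # map (\<lambda>i. Proj (i + 0)) [0..<k])) k (\<lambda>xs. Pf (0 # xs))"
  proof (rule rfn_cong[OF b])
    fix xs :: "nat list" assume lx: "length xs = k"
    have "map (\<lambda>G. G xs) (map (\<lambda>i xs. xs ! (i + 0)) [0..<k]) = take k (drop 0 xs)"
      by (rule map_take_drop) (use lx in simp)
    then show "Pf (map (\<lambda>G. G xs) ((\<lambda>_. 0) # map (\<lambda>i xs. xs ! (i + 0)) [0..<k])) = Pf (0 # xs)"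
      using lx by simp
  qed
  have s: "rfn (Comp Succ [Proj 0]) (k + 2) (\<lambda>xs. Suc (xs ! 0))"
    using rfn_Comp1[OF rfn_Succ rfn_Proj[of 0 "k + 2"]] by simp
  have l1: "list_all2 (\<lambda>g G. rfn g (k + 2) G) (Comp Succ [Proj 0] # map (\<lambda>i. Proj (i + 2)) [0..<k])
     ((\<lambda>xs. Suc (xs ! 0)) # map (\<lambda>i xs. xs ! (i + 2)) [0..<k])"
    using map_Proj_rfn[of 2 k "k + 2"] s by simp
  have c: "rfn (Comp P (Comp Succ [Proj 0] # map (\<lambda>i. Proj (i + 2)) [0..<k])) (k + 2)
      (\<lambda>xs. Pf (map (\<lambda>G. G xs) ((\<lambda>xs. Suc (xs ! 0)) # map (\<lambda>i xs. xs ! (i + 2)) [0..<k])))"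
    by (rule rfn_Comp[OF _ l1]) (simp add: P)
  have c': "rfn (Comp P (Comp Succ [Proj 0] # map (\<lambda>i. Proj (i + 2)) [0..<k])) (k + 2)
      (\<lambda>xs. Pf (Suc (xs ! 0) # drop 2 xs))"
  proof (rule rfn_cong[OF c])
    fix xs :: "nat list" assume lx: "length xs = k + 2"
    have "map (\<lambda>G. G xs) (map (\<lambda>i xs. xs ! (i + 2)) [0..<k]) = take k (drop 2 xs)"
      by (rule map_take_drop) (use lx in simp)
    then show "Pf (map (\<lambda>G. G xs) ((\<lambda>xs. Suc (xs ! 0)) # map (\<lambda>i xs. xs ! (i + 2)) [0..<k])) =
      Pf (Suc (xs ! 0) # drop 2 xs)"
      using lx by simp
  qed
  have st: "rfn (Comp add_p [Proj 1, Comp P (Comp Succ [Proj 0] # map (\<lambda>i. Proj (i + 2)) [0..<k])]) (k + 2)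
      (\<lambda>xs. xs ! 1 + Pf (Suc (xs ! 0) # drop 2 xs))"
    using rfn_Comp2[OF rfn_add rfn_Proj[of 1 "k + 2"] c'] by simp
  have pp: "rfn (Prim (Comp P (cn 0 # map (\<lambda>i. Proj (i + 0)) [0..<k]))
   (Comp add_p [Proj 1, Comp P (Comp Succ [Proj 0] # map (\<lambda>i. Proj (i + 2)) [0..<k])])) (Suc k)
     (\<lambda>xs. pr (\<lambda>xs. Pf (0 # xs)) (\<lambda>xs. xs ! 1 + Pf (Suc (xs ! 0) # drop 2 xs)) (hd xs) (tl xs))"
    by (rule rfn_Prim'[OF b' st]) simp_all
  have e: "(pr (\<lambda>xs. Pf (0 # xs)) (\<lambda>xs. xs ! 1 + Pf (Suc (xs ! 0) # drop 2 xs)) z ys \<noteq> 0) =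
     (\<exists>i\<le>z. Pf (i # ys) \<noteq> 0)" for z ys
  proof (induction z)
    case 0 then show ?case by simp
  next
    case (Suc z) then show ?case by (auto simp: le_Suc_eq)
  qed
  show ?thesis unfolding bex_p_def
  proof (rule rfn_cong[OF rfn_Comp1[OF rfn_sg pp]])
    fix xs :: "nat list" assume "length xs = Suc k"
    show "(\<lambda>xs. if xs ! 0 = 0 then 0 else 1) [pr (\<lambda>xs. Pf (0 # xs)) (\<lambda>xs. xs ! 1 + Pf (Suc (xs ! 0) # drop 2 xs)) (hd xs) (tl xs)]
       = (if \<exists>i\<le>hd xs. Pf (i # tl xs) \<noteq> 0 then 1 else 0)"
    proof -
      define r where "r = pr (\<lambda>xs. Pf (0 # xs)) (\<lambda>xs. xs ! 1 + Pf (Suc (xs ! 0) # drop 2 xs)) (hd xs) (tl xs)"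
      have E: "(r \<noteq> 0) = (\<exists>i\<le>hd xs. Pf (i # tl xs) \<noteq> 0)" unfolding r_def by (rule e)
      show ?thesis unfolding r_def[symmetric] by (cases "r = 0") (use E in auto)
    qed
  qed
qed

definition "bexz P k j = Comp (bex_p P k) (Proj j # map (\<lambda>i. Proj (i + 0)) [0..<k])"

lemma rfn_bexz:
  assumes P: "rfn P (Suc k) Pf" and j: "j < k"
  shows "rfn (bexz P k j) k (\<lambda>xs. if \<exists>i\<le>xs ! j. Pf (i # xs) \<noteq> 0 then 1 else 0)"
proof -
  have l: "list_all2 (\<lambda>g G. rfn g k G) (Proj j # map (\<lambda>i. Proj (i + 0)) [0..<k])
     ((\<lambda>xs. xs ! j) # map (\<lambda>i xs. xs ! (i + 0)) [0..<k])"
    using map_Proj_rfn[of 0 k k] rfn_Proj[OF j] by simp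
  have c: "rfn (bexz P k j) k (\<lambda>xs. (\<lambda>xs. if \<exists>i\<le>hd xs. Pf (i # tl xs) \<noteq> 0 then 1 else 0)
      (map (\<lambda>G. G xs) ((\<lambda>xs. xs ! j) # map (\<lambda>i xs. xs ! (i + 0)) [0..<k])))"
    unfolding bexz_def by (rule rfn_Comp[OF _ l]) (use rfn_bex[OF P] in simp)
  show ?thesis
  proof (rule rfn_cong[OF c])
    fix xs :: "nat list" assume lx: "length xs = k"
    have "map (\<lambda>G. G xs) (map (\<lambda>i xs. xs ! (i + 0)) [0..<k]) = take k (drop 0 xs)"
      by (rule map_take_drop) (use lx in simp)
    then have "map (\<lambda>G. G xs) (map (\<lambda>i xs. xs ! (i + 0)) [0..<k]) = xs" using lx by simp
    then show "(\<lambda>xs. if \<exists>i\<le>hd xs. Pf (i # tl xs) \<noteq> 0 then 1 else 0)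
      (map (\<lambda>G. G xs) ((\<lambda>xs. xs ! j) # map (\<lambda>i xs. xs ! (i + 0)) [0..<k])) =
      (if \<exists>i\<le>xs ! j. Pf (i # xs) \<noteq> 0 then 1 else 0)" by simp
  qed
qed



definition bi :: "bool \<Rightarrow> nat" where "bi P = (if P then 1 else 0)"

lemma bi_simps[simp]: "(bi P \<noteq> 0) = P" "(bi P = 0) = (\<not> P)" "(0 < bi P) = P"
  by (auto simp: bi_def)

lemma bi_cong: "(P \<longleftrightarrow> Q) \<Longrightarrow> bi P = bi Q" by simp

lemma rfn_and: "rfn a k (\<lambda>xs. bi (Pa xs)) \<Longrightarrow> rfn b k (\<lambda>xs. bi (Pb xs)) \<Longrightarrow>
  rfn (Comp mul_p [a, b]) k (\<lambda>xs. bi (Pa xs \<and> Pb xs))"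
  by (rule rfn_cong[OF rfn_Comp2[OF rfn_mul]]) (auto simp: bi_def)

lemma rfn_not: "rfn a k (\<lambda>xs. bi (Pa xs)) \<Longrightarrow> rfn (Comp tsub_p [a, cn 1]) k (\<lambda>xs. bi (\<not> Pa xs))"
  by (rule rfn_cong[OF rfn_Comp2[OF rfn_tsub _ rfn_cn]]) (auto simp: bi_def)

lemma rfn_nz: "rfn a k A \<Longrightarrow> rfn (Comp sg_p [a]) k (\<lambda>xs. bi (A xs \<noteq> 0))"
  by (rule rfn_cong[OF rfn_Comp1[OF rfn_sg]]) (auto simp: bi_def)

lemma rfn_eqv: "rfn a k A \<Longrightarrow> rfn b k B \<Longrightarrow> rfn (Comp eq_p [a, b]) k (\<lambda>xs. bi (A xs = B xs))"
  by (rule rfn_cong[OF rfn_Comp2[OF rfn_eq]]) (auto simp: bi_def)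

definition "mq_p ci W K = Comp eq_p [Comp mod_p [Proj ci, Comp pow2_p [W]], cn K]"

lemma rfn_mq: "rfn W k Wf \<Longrightarrow> ci < k \<Longrightarrow> rfn (mq_p ci W K) k (\<lambda>xs. bi (xs ! ci mod 2 ^ Wf xs = K))"
  unfolding mq_p_def
  by (rule rfn_eqv[OF rfn_Comp2[OF rfn_mod rfn_Proj rfn_Comp1[OF rfn_pow2]] rfn_cn, simplified]) auto

definition "clkc p xi si ci = Comp (tr p 1) [Proj xi, Proj si, Proj ci]"

lemma rfn_clk: "rfn (tr p 1) 3 (\<lambda>ys. fc p (ys ! 1) (set_decode (ys ! 2)) [ys ! 0])"
proof -
  have "rfn (tr p 1) (1 + 2) (sem p 1)" by (rule tr_correct)
  then have r: "rfn (tr p 1) 3 (sem p 1)" by (simp add: numeral_3_eq_3)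
  show ?thesis
  proof (rule rfn_cong[OF r])
  fix ys :: "nat list" assume "length ys = 3"
  then obtain a b c where "ys = [a, b, c]" using len3 by blast
  then show "sem p 1 ys = fc p (ys ! 1) (set_decode (ys ! 2)) [ys ! 0]" by (simp add: sem_def)
  qed
qed

lemma rfn_clkc: "xi < k \<Longrightarrow> si < k \<Longrightarrow> ci < k \<Longrightarrow>
  rfn (clkc p xi si ci) k (\<lambda>xs. fc p (xs ! si) (set_decode (xs ! ci)) [xs ! xi])"
  unfolding clkc_def using rfn_Comp3[OF rfn_clk rfn_Proj rfn_Proj rfn_Proj] by simp

lemma rfn_bexz':
  "rfn P k1 Pf \<Longrightarrow> k1 = Suc k \<Longrightarrow> j < k \<Longrightarrow>
   rfn (bexz P k j) k (\<lambda>xs. bi (\<exists>i\<le>xs ! j. Pf (i # xs) \<noteq> 0))"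
  using rfn_bexz[of P k Pf j] by (simp add: bi_def)

section \<open>Computing C\<close>

definition "QT p b K = Comp mul_p [mq_p 1 (cn b) K, Comp sg_p [clkc p 3 0 1]]"
definition "QV p b K = Comp mul_p [mq_p 1 (cn b) K, Comp eq_p [clkc p 3 0 1, cn 2]]"
definition "Tp p b K = bexz (bexz (QT p b K) 3 1) 2 0"
definition "Vp p b K = bexz (bexz (QV p b K) 3 1) 2 0"
definition "Cp p b K = Comp (Vp p b K) [Mn (Comp tsub_p [Tp p b K, cn 1]), Proj 0]"

definition "Tpred p b K z x = (\<exists>c\<le>z. \<exists>s\<le>z. c mod 2 ^ b = K \<and> fc p s (set_decode c) [x] \<noteq> 0)"
definition "Vpred p b K z x = (\<exists>c\<le>z. \<exists>s\<le>z. c mod 2 ^ b = K \<and> fc p s (set_decode c) [x] = 2)"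

lemma rfn_Tp: "rfn (Tp p b K) 2 (\<lambda>xs. bi (Tpred p b K (xs ! 0) (xs ! 1)))"
proof -
  have q: "rfn (QT p b K) 4 (\<lambda>xs. bi (xs ! 1 mod 2 ^ b = K \<and> fc p (xs ! 0) (set_decode (xs ! 1)) [xs ! 3] \<noteq> 0))"
    unfolding QT_def by (rule rfn_and[OF rfn_mq[OF rfn_cn] rfn_nz[OF rfn_clkc]]) simp_all
  have t1: "rfn (bexz (QT p b K) 3 1) 3 (\<lambda>xs. bi (\<exists>s\<le>xs ! 1. xs ! 0 mod 2 ^ b = K \<and> fc p s (set_decode (xs ! 0)) [xs ! 2] \<noteq> 0))"
    by (rule rfn_cong[OF rfn_bexz'[OF q]], simp, simp, rule bi_cong, auto)
  show ?thesis unfolding Tp_def Tpred_def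
    by (rule rfn_cong[OF rfn_bexz'[OF t1]], simp, simp, rule bi_cong, auto)
qed

lemma rfn_Vp: "rfn (Vp p b K) 2 (\<lambda>xs. bi (Vpred p b K (xs ! 0) (xs ! 1)))"
proof -
  have q: "rfn (QV p b K) 4 (\<lambda>xs. bi (xs ! 1 mod 2 ^ b = K \<and> fc p (xs ! 0) (set_decode (xs ! 1)) [xs ! 3] = 2))"
    unfolding QV_def by (rule rfn_and[OF rfn_mq[OF rfn_cn] rfn_eqv[OF rfn_clkc rfn_cn]]) simp_all
  have t1: "rfn (bexz (QV p b K) 3 1) 3 (\<lambda>xs. bi (\<exists>s\<le>xs ! 1. xs ! 0 mod 2 ^ b = K \<and> fc p s (set_decode (xs ! 0)) [xs ! 2] = 2))"
    by (rule rfn_cong[OF rfn_bexz'[OF q]], simp, simp, rule bi_cong, auto)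
  show ?thesis unfolding Vp_def Vpred_def
    by (rule rfn_cong[OF rfn_bexz'[OF t1]], simp, simp, rule bi_cong, auto)
qed

lemma rfn_Mn':
  assumes "rfn f k1 F" "k1 = Suc k" "\<And>xs. length xs = k \<Longrightarrow> \<exists>n. F (n # xs) = 0"
  shows "rfn (Mn f) k (\<lambda>xs. LEAST n. F (n # xs) = 0)"
  using rfn_Mn[of f k F] assms by simp

lemma computable_C:
  assumes ex: "\<And>x. \<exists>c s. c mod 2 ^ b = K \<and> fc p s (set_decode c) [x] \<noteq> 0"
    and ag: "\<And>x c s y. c mod 2 ^ b = K \<Longrightarrow> fc p s (set_decode c) [x] = Suc y \<Longrightarrow> y = (if x \<in> C then 1 else 0)"
  shows "computable_set C"
proof -
  let ?T = "Tpred p b K"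
  let ?V = "Vpred p b K"
  have nt: "rfn (Comp tsub_p [Tp p b K, cn 1]) 2 (\<lambda>xs. bi (\<not> ?T (xs ! 0) (xs ! 1)))"
    by (rule rfn_not[OF rfn_Tp])
  have m: "rfn (Mn (Comp tsub_p [Tp p b K, cn 1])) 1 (\<lambda>xs. LEAST n. bi (\<not> ?T ((n # xs) ! 0) ((n # xs) ! 1)) = 0)"
  proof (rule rfn_Mn'[OF nt])
    fix xs :: "nat list" assume "length xs = 1"
    obtain c s where "c mod 2 ^ b = K" "fc p s (set_decode c) [xs ! 0] \<noteq> 0" using ex by blast
    then have "?T (max c s) (xs ! 0)" unfolding Tpred_def using max.cobounded1[of c s] max.cobounded2[of s c] by blast
    then show "\<exists>n. bi (\<not> ?T ((n # xs) ! 0) ((n # xs) ! 1)) = 0" by auto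
  qed simp
  have c: "rfn (Cp p b K) 1 (\<lambda>xs. bi (?V (LEAST n. ?T n (xs ! 0)) (xs ! 0)))"
    unfolding Cp_def by (rule rfn_cong[OF rfn_Comp2[OF rfn_Vp m rfn_Proj]]) simp_all
  have val: "bi (?V (LEAST n. ?T n x) x) = (if x \<in> C then 1 else 0)" for x
  proof -
    let ?z = "LEAST n. ?T n x"
    obtain c s where "c mod 2 ^ b = K" "fc p s (set_decode c) [x] \<noteq> 0" using ex by blast
    then have "?T (max c s) x" unfolding Tpred_def using max.cobounded1[of c s] max.cobounded2[of s c] by blast
    then have "?T ?z x" by (rule LeastI)
    then obtain c s where cs: "c \<le> ?z" "s \<le> ?z" "c mod 2 ^ b = K" "fc p s (set_decode c) [x] \<noteq> 0"
      unfolding Tpred_def by blast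
    then obtain y where y: "fc p s (set_decode c) [x] = Suc y" by (cases "fc p s (set_decode c) [x]") auto
    with cs ag have yv: "y = (if x \<in> C then 1 else 0)" by blast
    show ?thesis
    proof (cases "x \<in> C")
      case True
      then have "fc p s (set_decode c) [x] = 2" using y yv by simp
      then have "?V ?z x" unfolding Vpred_def using cs by blast
      then show ?thesis using True by (simp add: bi_def)
    next
      case False
      have "\<not> ?V ?z x"
      proof
        assume "?V ?z x"
        then obtain c' s' where "c' mod 2 ^ b = K" "fc p s' (set_decode c') [x] = 2"
          unfolding Vpred_def by blast
        then have "c' mod 2 ^ b = K" "fc p s' (set_decode c') [x] = Suc 1" by simp_all
        with ag have "1 = (if x \<in> C then 1 else (0::nat))" by blast
        with False show False by simp
      qed
      then show ?thesis using False by (simp add: bi_def)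
    qed
  qed
  have "\<forall>x. eval {} (Cp p b K) [x] (if x \<in> C then 1 else 0)"
  proof
    fix x
    from c have "eval {} (Cp p b K) [x] (bi (?V (LEAST n. ?T n ([x] ! 0)) ([x] ! 0)))"
      unfolding rfn_def by (metis One_nat_def length_Cons list.size(3))
    then show "eval {} (Cp p b K) [x] (if x \<in> C then 1 else 0)" using val by simp
  qed
  then show ?thesis unfolding computable_set_def turing_reducible_def rel_computable_def by blast
qed



section \<open>The escaping function for the hyperimmunity argument\<close>

definition "Wpred p u K b z = (\<exists>x\<le>z. \<exists>c0\<le>z. \<exists>c1\<le>z. \<exists>s0\<le>z. \<exists>s1\<le>z.
   c0 mod 2 ^ (b + u) = K \<and> c1 mod 2 ^ (b + u) = K \<and>
   fc p s0 (set_decode c0) [x] \<noteq> 0 \<and> fc p s1 (set_decode c1) [x] \<noteq> 0 \<and>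
   fc p s0 (set_decode c0) [x] \<noteq> fc p s1 (set_decode c1) [x])"

definition "Wexp u = Comp add_p [Proj 6, cn u]"

definition "QW p u K = Comp mul_p [mq_p 3 (Wexp u) K, Comp mul_p [mq_p 2 (Wexp u) K,
  Comp mul_p [Comp sg_p [clkc p 4 1 3], Comp mul_p [Comp sg_p [clkc p 4 0 2],
  Comp tsub_p [Comp eq_p [clkc p 4 1 3, clkc p 4 0 2], cn 1]]]]]"

definition "W1p p u K = bexz (bexz (bexz (bexz (bexz (QW p u K) 6 4) 5 3) 4 2) 3 1) 2 0"

lemma rfn_W1: "rfn (W1p p u K) 2 (\<lambda>xs. bi (Wpred p u K (xs ! 1) (xs ! 0)))"
proof -
  have we: "rfn (Wexp u) 7 (\<lambda>xs. xs ! 6 + u)"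
    unfolding Wexp_def using rfn_Comp2[OF rfn_add rfn_Proj[of 6 7] rfn_cn[of u]] by simp
  have q: "rfn (QW p u K) 7 (\<lambda>xs. bi (xs ! 3 mod 2 ^ (xs ! 6 + u) = K \<and> (xs ! 2 mod 2 ^ (xs ! 6 + u) = K \<and>
     (fc p (xs ! 1) (set_decode (xs ! 3)) [xs ! 4] \<noteq> 0 \<and> (fc p (xs ! 0) (set_decode (xs ! 2)) [xs ! 4] \<noteq> 0 \<and>
     \<not> fc p (xs ! 1) (set_decode (xs ! 3)) [xs ! 4] = fc p (xs ! 0) (set_decode (xs ! 2)) [xs ! 4])))))"
    unfolding QW_def
    by (intro rfn_and rfn_mq[OF we] rfn_nz rfn_not rfn_eqv rfn_clkc) simp_all
  note w5 = rfn_bexz'[OF q, where k=6 and j=4, simplified]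
  note w4 = rfn_bexz'[OF w5, where k=5 and j=3, simplified]
  note w3 = rfn_bexz'[OF w4, where k=4 and j=2, simplified]
  note w2 = rfn_bexz'[OF w3, where k=3 and j=1, simplified]
  note w1 = rfn_bexz'[OF w2, where k=2 and j=0, simplified]
  show ?thesis unfolding W1p_def Wpred_def One_nat_def
    apply (rule rfn_cong[OF w1])
    apply (rule bi_cong)
    apply (simp only: neq0_conv[symmetric])
    apply blast
    done
qed



section \<open>Coding finite sets\<close>

lemma dec_less: "i \<in> set_decode c \<Longrightarrow> i < c"
proof -
  assume "i \<in> set_decode c"
  then have "odd (c div 2 ^ i)" by (simp add: set_decode_def)
  then have "c div 2 ^ i \<noteq> 0" by (metis even_zero)
  then have "2 ^ i \<le> c" by (simp add: div_eq_0_iff not_less)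
  moreover have "i < 2 ^ i" by (rule less_exp)
  ultimately show "i < c" by linarith
qed

lemma dec_mod_eq: "set_decode (c mod 2 ^ w) = set_decode c \<inter> {..<w}"
proof (rule set_eqI)
  fix i
  have "i \<in> set_decode (c mod 2 ^ w) \<longleftrightarrow> bit (take_bit w c) i"
    by (simp add: set_decode_def bit_iff_odd take_bit_eq_mod)
  also have "\<dots> \<longleftrightarrow> i < w \<and> bit c i" by (simp add: bit_take_bit_iff)
  also have "\<dots> \<longleftrightarrow> i \<in> set_decode c \<inter> {..<w}" by (auto simp: set_decode_def bit_iff_odd)
  finally show "i \<in> set_decode (c mod 2 ^ w) \<longleftrightarrow> i \<in> set_decode c \<inter> {..<w}" .
qed

lemma enc_mod: "finite D \<Longrightarrow> D \<inter> {..<w} = S \<Longrightarrow> set_encode D mod 2 ^ w = set_encode S"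
proof -
  assume f: "finite D" and e: "D \<inter> {..<w} = S"
  have "set_encode D mod 2 ^ w = set_encode (set_decode (set_encode D mod 2 ^ w))"
    by (simp add: set_decode_inverse)
  also have "\<dots> = set_encode (set_decode (set_encode D) \<inter> {..<w})" by (simp only: dec_mod_eq)
  also have "\<dots> = set_encode S" using f e by (simp add: set_encode_inverse)
  finally show ?thesis .
qed

lemma dec_mod: "finite S \<Longrightarrow> c mod 2 ^ w = set_encode S \<Longrightarrow> set_decode c \<inter> {..<w} = S"
proof -
  assume f: "finite S" and e: "c mod 2 ^ w = set_encode S"
  have "set_decode c \<inter> {..<w} = set_decode (c mod 2 ^ w)" by (simp only: dec_mod_eq)
  also have "\<dots> = S" using e f by (simp add: set_encode_inverse)
  finally show ?thesis .
qed

lemma enum_le: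
  assumes "infinite S" "strict_mono e" "\<And>n. e n \<in> S"
  shows "enumerate S n \<le> e n"
proof (induction n)
  case 0
  show ?case unfolding enumerate_0 by (rule Least_le) (rule assms(3))
next
  case (Suc n)
  have "enumerate S n < e (Suc n)" using Suc assms(2) unfolding strict_mono_def
    by (meson lessI order_le_less_trans)
  then have "e (Suc n) \<in> S \<and> enumerate S n < e (Suc n)" using assms(3) by blast
  then show ?case unfolding enumerate_Suc''[OF assms(1)] by (rule Least_le)
qed



definition "hfun p u K b = Suc (LEAST z. Wpred p u K b z)"
definition "hp p u K = Comp Succ [Mn (Comp tsub_p [W1p p u K, cn 1])]"
definition "qp p u K = Prim (Comp (hp p u K) [cn 0]) (Comp (hp p u K) [Proj 1])"

lemma computable_q:
  assumes ex: "\<And>b. \<exists>z. Wpred p u K b z"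
  shows "computable_fun (\<lambda>n. (hfun p u K ^^ Suc n) 0)"
proof -
  have nt: "rfn (Comp tsub_p [W1p p u K, cn 1]) 2 (\<lambda>xs. bi (\<not> Wpred p u K (xs ! 1) (xs ! 0)))"
    by (rule rfn_not[OF rfn_W1])
  have m: "rfn (Mn (Comp tsub_p [W1p p u K, cn 1])) 1 (\<lambda>xs. LEAST n. bi (\<not> Wpred p u K ((n # xs) ! 1) ((n # xs) ! 0)) = 0)"
    by (rule rfn_Mn'[OF nt]) (use ex in auto)
  have h: "rfn (hp p u K) 1 (\<lambda>xs. hfun p u K (xs ! 0))"
    unfolding hp_def hfun_def by (rule rfn_cong[OF rfn_Comp1[OF rfn_Succ m]]) simp
  have b: "rfn (Comp (hp p u K) [cn 0]) 0 (\<lambda>xs. hfun p u K 0)"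
    using rfn_Comp1[OF h rfn_cn[of 0 0]] by simp
  have st: "rfn (Comp (hp p u K) [Proj 1]) 2 (\<lambda>xs. hfun p u K (xs ! 1))"
    using rfn_Comp1[OF h rfn_Proj[of 1 2]] by simp
  have q: "rfn (qp p u K) 1 (\<lambda>xs. pr (\<lambda>xs. hfun p u K 0) (\<lambda>xs. hfun p u K (xs ! 1)) (hd xs) (tl xs))"
    unfolding qp_def by (rule rfn_Prim'[OF b st]) simp_all
  have e: "pr (\<lambda>xs. hfun p u K 0) (\<lambda>xs. hfun p u K (xs ! 1)) n ys = (hfun p u K ^^ Suc n) 0" for n ys
    by (induction n) auto
  have "\<forall>x. eval {} (qp p u K) [x] ((hfun p u K ^^ Suc x) 0)"
  proof
    fix x
    have "eval {} (qp p u K) [x] (pr (\<lambda>xs. hfun p u K 0) (\<lambda>xs. hfun p u K (xs ! 1)) (hd [x]) (tl [x]))"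
      using q unfolding rfn_def by (metis One_nat_def length_Cons list.size(3))
    then show "eval {} (qp p u K) [x] ((hfun p u K ^^ Suc x) 0)" by (simp only: e list.sel)
  qed
  then show ?thesis unfolding computable_fun_def rel_computable_def by blast
qed

lemma subset_lessThan_Int:
  fixes D S :: "nat set" and u w :: nat
  assumes su: "S \<subseteq> {..<u}" and uw: "u \<le> w" and e: "D \<inter> {..<w} = S"
  shows "D \<inter> {..<u} = S"
proof (rule set_eqI)
  fix i
  show "i \<in> D \<inter> {..<u} \<longleftrightarrow> i \<in> S"
  proof
    assume h: "i \<in> D \<inter> {..<u}"
    have "i \<in> D" using h by simp
    moreover have "i < u" using h by simp
    then have "i < w" using uw by linarith
    ultimately have "i \<in> D \<inter> {..<w}" by simp
    then show "i \<in> S" using e by simp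
  next
    assume i: "i \<in> S"
    then have "i \<in> D \<inter> {..<w}" using e by simp
    moreover have "i < u" using i su by auto
    ultimately show "i \<in> D \<inter> {..<u}" by simp
  qed
qed

lemma hyp_escape:
  fixes A :: "nat set"
  assumes fin: "finite \<sigma>" and sA: "\<sigma> \<subseteq> A" and su: "\<sigma> \<subseteq> {..<u}"
    and notc1: "\<And>D x y. finite D \<Longrightarrow> D \<subseteq> A \<Longrightarrow> D \<inter> {..<u} = \<sigma> \<Longrightarrow> eval D p [x] y \<Longrightarrow>
        y = (if x \<in> C then 1 else 0)"
    and pairs: "\<And>b. \<exists>x D0 D1 y0 y1. finite D0 \<and> finite D1 \<and> D0 \<inter> {..<b + u} = \<sigma> \<and>
        D1 \<inter> {..<b + u} = \<sigma> \<and> eval D0 p [x] y0 \<and> eval D1 p [x] y1 \<and> y0 \<noteq> y1"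
    and inf: "infinite (- A)"
  shows "\<not> hyperimmune (- A)"
proof -
  let ?K = "set_encode \<sigma>"
  let ?h = "hfun p u ?K"
  have ex: "\<exists>z. Wpred p u ?K b z" for b
  proof -
    obtain x D0 D1 y0 y1 where d: "finite D0" "finite D1" "D0 \<inter> {..<b + u} = \<sigma>"
        "D1 \<inter> {..<b + u} = \<sigma>" "eval D0 p [x] y0" "eval D1 p [x] y1" "y0 \<noteq> y1"
      using pairs[of b] by (elim exE conjE) (rule that; assumption)
    obtain s0 where s0: "\<forall>s\<ge>s0. fc p s D0 [x] = Suc y0" using fc_complete[OF d(5)] by blast
    obtain s1 where s1: "\<forall>s\<ge>s1. fc p s D1 [x] = Suc y1" using fc_complete[OF d(6)] by blast
    let ?c0 = "set_encode D0" and ?c1 = "set_encode D1"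
    have m0: "?c0 mod 2 ^ (b + u) = ?K" by (rule enc_mod[OF d(1) d(3)])
    have m1: "?c1 mod 2 ^ (b + u) = ?K" by (rule enc_mod[OF d(2) d(4)])
    have e0: "set_decode ?c0 = D0" by (rule set_encode_inverse[OF d(1)])
    have e1: "set_decode ?c1 = D1" by (rule set_encode_inverse[OF d(2)])
    let ?z = "max x (max ?c0 (max ?c1 (max s0 s1)))"
    have "fc p s0 D0 [x] = Suc y0" using s0 by blast
    then have f0: "fc p s0 (set_decode ?c0) [x] = Suc y0" by (simp only: e0)
    have "fc p s1 D1 [x] = Suc y1" using s1 by blast
    then have f1: "fc p s1 (set_decode ?c1) [x] = Suc y1" by (simp only: e1)
    have b1: "x \<le> ?z" "?c0 \<le> ?z" "?c1 \<le> ?z" "s0 \<le> ?z" "s1 \<le> ?z" by (simp_all add: le_max_iff_disj)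
    have cc: "?c0 mod 2 ^ (b + u) = ?K \<and> ?c1 mod 2 ^ (b + u) = ?K \<and>
      fc p s0 (set_decode ?c0) [x] \<noteq> 0 \<and> fc p s1 (set_decode ?c1) [x] \<noteq> 0 \<and>
      fc p s0 (set_decode ?c0) [x] \<noteq> fc p s1 (set_decode ?c1) [x]"
      by (intro conjI) (simp_all only: m0 m1 f0 f1 nat.distinct nat.inject d(7) not_False_eq_True)
    have "Wpred p u ?K b ?z" unfolding Wpred_def using b1 cc by blast
    then show ?thesis by blast
  qed
  have esc: "\<exists>i. i \<notin> A \<and> b + u \<le> i \<and> i < ?h b" for b
  proof -
    let ?z = "LEAST z. Wpred p u ?K b z"
    have "Wpred p u ?K b ?z" using ex[of b] by (rule LeastI_ex)
    then obtain x c0 c1 s0 s1 where w: "c0 \<le> ?z" "c1 \<le> ?z"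
      "c0 mod 2 ^ (b + u) = ?K" "c1 mod 2 ^ (b + u) = ?K"
      "fc p s0 (set_decode c0) [x] \<noteq> 0" "fc p s1 (set_decode c1) [x] \<noteq> 0"
      "fc p s0 (set_decode c0) [x] \<noteq> fc p s1 (set_decode c1) [x]"
      unfolding Wpred_def by blast
    obtain y0 where y0: "fc p s0 (set_decode c0) [x] = Suc y0" using w(5) not0_implies_Suc by blast
    obtain y1 where y1: "fc p s1 (set_decode c1) [x] = Suc y1" using w(6) not0_implies_Suc by blast
    have ev0: "eval (set_decode c0) p [x] y0" by (rule fc_sound[OF y0])
    have ev1: "eval (set_decode c1) p [x] y1" by (rule fc_sound[OF y1])
    have ne: "y0 \<noteq> y1" using w(7) y0 y1 by simp
    have i0: "set_decode c0 \<inter> {..<b + u} = \<sigma>" by (rule dec_mod[OF fin w(3)])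
    have i1: "set_decode c1 \<inter> {..<b + u} = \<sigma>" by (rule dec_mod[OF fin w(4)])
    have j0: "set_decode c0 \<inter> {..<u} = \<sigma>" by (rule subset_lessThan_Int[OF su _ i0]) simp
    have j1: "set_decode c1 \<inter> {..<u} = \<sigma>" by (rule subset_lessThan_Int[OF su _ i1]) simp
    have "\<not> (set_decode c0 \<subseteq> A \<and> set_decode c1 \<subseteq> A)"
    proof
      assume "set_decode c0 \<subseteq> A \<and> set_decode c1 \<subseteq> A"
      then have "y0 = (if x \<in> C then 1 else 0)" "y1 = (if x \<in> C then 1 else 0)"
        using notc1[OF finite_set_decode _ j0 ev0] notc1[OF finite_set_decode _ j1 ev1] by auto
      with ne show False by simp
    qed
    then have "\<exists>c. c \<le> ?z \<and> set_decode c \<inter> {..<b + u} = \<sigma> \<and> \<not> set_decode c \<subseteq> A"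
      using w(1,2) i0 i1 by blast
    then obtain c where c: "c \<le> ?z" "set_decode c \<inter> {..<b + u} = \<sigma>" "\<not> set_decode c \<subseteq> A"
      by blast
    from c(3) obtain i where ic1: "i \<in> set_decode c" and ic2: "i \<notin> A" unfolding subset_iff by blast
    have ic: "i \<in> set_decode c" "i \<notin> A" "c \<le> ?z" using ic1 ic2 c(1) by simp_all
    have "i \<notin> \<sigma>" using ic2 sA by (meson subsetD)
    have "\<not> i < b + u"
    proof
      assume "i < b + u"
      then have "i \<in> set_decode c \<inter> {..<b + u}" using ic1 by simp
      then have "i \<in> \<sigma>" using c(2) by simp
      with \<open>i \<notin> \<sigma>\<close> show False by simp
    qed
    moreover have "i < c" by (rule dec_less[OF ic(1)])
    ultimately have "b + u \<le> i" "i < ?h b" using ic(3) unfolding hfun_def by simp_all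
    then show ?thesis using ic(2) by blast
  qed
  define e where "e n = (SOME i. i \<notin> A \<and> (?h ^^ n) 0 + u \<le> i \<and> i < ?h ((?h ^^ n) 0))" for n
  have e0: "e n \<notin> A \<and> (?h ^^ n) 0 + u \<le> e n \<and> e n < ?h ((?h ^^ n) 0)" for n
    unfolding e_def by (rule someI_ex[OF esc])
  have e: "e n \<notin> A" "(?h ^^ n) 0 + u \<le> e n" "e n < (?h ^^ Suc n) 0" for n
    using e0[of n] by simp_all
  have sm: "strict_mono e"
    unfolding strict_mono_Suc_iff
  proof
    fix n
    have "e n < (?h ^^ Suc n) 0" by (rule e(3))
    also have "\<dots> \<le> (?h ^^ Suc n) 0 + u" by simp
    also have "\<dots> \<le> e (Suc n)" by (rule e(2))
    finally show "e n < e (Suc n)" .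
  qed
  have bound: "\<forall>n. enumerate (- A) n \<le> (?h ^^ Suc n) 0"
  proof
    fix n
    have "enumerate (- A) n \<le> e n" by (rule enum_le[OF inf sm]) (simp add: e(1))
    then show "enumerate (- A) n \<le> (?h ^^ Suc n) 0" using e(3)[of n] by linarith
  qed
  have "computable_fun (\<lambda>n. (?h ^^ Suc n) 0)" by (rule computable_q[OF ex])
  then have "\<exists>f. computable_fun f \<and> (\<forall>n. enumerate (- A) n \<le> f n)"
    using bound by (intro exI[of _ "\<lambda>n. (?h ^^ Suc n) 0"]) simp
  then show ?thesis unfolding hyperimmune_def by simp
qed



lemma Int_lessThan_mono:
  fixes G :: "nat set" and B m :: nat
  assumes "B \<le> m"
  shows "(G \<inter> {..<m}) \<inter> {..<B} = G \<inter> {..<B}"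
proof (rule set_eqI)
  fix i
  show "i \<in> (G \<inter> {..<m}) \<inter> {..<B} \<longleftrightarrow> i \<in> G \<inter> {..<B}"
  proof
    assume "i \<in> (G \<inter> {..<m}) \<inter> {..<B}" then show "i \<in> G \<inter> {..<B}" by simp
  next
    assume h: "i \<in> G \<inter> {..<B}"
    then have "i < B" by simp
    then have "i < m" using assms by linarith
    then show "i \<in> (G \<inter> {..<m}) \<inter> {..<B}" using h by simp
  qed
qed

lemma Int_lessThan_absorb:
  fixes D :: "nat set"
  assumes "D \<subseteq> {..<m}" shows "D \<inter> {..<m} = D"
  using assms by (rule Int_absorb2)

lemma req:
  fixes A C :: "nat set"
  assumes nc: "\<not> computable_set C" and hi: "hyperimmune (- A)"
    and fin: "finite \<sigma>" and sA: "\<sigma> \<subseteq> A" and su: "\<sigma> \<subseteq> {..<u}"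
  shows "\<exists>\<sigma>' u'. finite \<sigma>' \<and> \<sigma>' \<subseteq> A \<and> \<sigma>' \<subseteq> {..<u'} \<and> u \<le> u' \<and> \<sigma>' \<inter> {..<u} = \<sigma> \<and>
    (\<forall>G. G \<subseteq> A \<longrightarrow> G \<inter> {..<u'} = \<sigma>' \<longrightarrow> \<not> (\<forall>x. eval G p [x] (if x \<in> C then 1 else 0)))"
proof (cases "\<exists>D x y. finite D \<and> D \<subseteq> A \<and> D \<inter> {..<u} = \<sigma> \<and> eval D p [x] y \<and> y \<noteq> (if x \<in> C then 1 else 0)")
  case True
  then obtain D x y where D: "finite D" "D \<subseteq> A" "D \<inter> {..<u} = \<sigma>" "eval D p [x] y"
    "y \<noteq> (if x \<in> C then 1 else 0)" by blast
  obtain w where w: "\<forall>Y. agree D Y w \<longrightarrow> eval Y p [x] y" using eval_use[OF D(4)] by blast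
  let ?u' = "u + w + set_encode D"
  have Dsub: "D \<subseteq> {..<?u'}"
  proof
    fix i assume "i \<in> D"
    then have "i \<in> set_decode (set_encode D)" using D(1) by (simp add: set_encode_inverse)
    then have "i < set_encode D" by (rule dec_less)
    then show "i \<in> {..<?u'}" by simp
  qed
  have "\<forall>G. G \<subseteq> A \<longrightarrow> G \<inter> {..<?u'} = D \<longrightarrow> \<not> (\<forall>x. eval G p [x] (if x \<in> C then 1 else 0))"
  proof (intro allI impI)
    fix G assume GA: "G \<subseteq> A" and GD: "G \<inter> {..<?u'} = D"
    have "agree D G ?u'" unfolding agree_def using GD Int_lessThan_absorb[OF Dsub] by simp
    then have "agree D G w" by (rule agree_mono) simp
    then have ev: "eval G p [x] y" using w by blast
    show "\<not> (\<forall>x. eval G p [x] (if x \<in> C then 1 else 0))"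
    proof
      assume "\<forall>x. eval G p [x] (if x \<in> C then 1 else 0)"
      then have "eval G p [x] (if x \<in> C then 1 else 0)" by blast
      with ev have "y = (if x \<in> C then 1 else 0)" by (rule eval_det)
      with D(5) show False by simp
    qed
  qed
  moreover have "u \<le> ?u'" by simp
  ultimately show ?thesis using D(1,2,3) Dsub by (intro exI[of _ D] exI[of _ ?u']) simp
next
  case False
  let ?chi = "\<lambda>x. if x \<in> C then 1 else (0::nat)"
  have notc1: "\<And>D x y. finite D \<Longrightarrow> D \<subseteq> A \<Longrightarrow> D \<inter> {..<u} = \<sigma> \<Longrightarrow> eval D p [x] y \<Longrightarrow> y = ?chi x"
    using False by blast
  have inf: "infinite (- A)" using hi unfolding hyperimmune_def by blast
  have "\<exists>b. \<forall>x D0 D1 y0 y1. finite D0 \<and> finite D1 \<and> D0 \<inter> {..<b + u} = \<sigma> \<and>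
        D1 \<inter> {..<b + u} = \<sigma> \<and> eval D0 p [x] y0 \<and> eval D1 p [x] y1 \<longrightarrow> y0 = y1"
  proof (rule ccontr)
    assume nt: "\<not> ?thesis"
    have pairs: "\<exists>x D0 D1 y0 y1. finite D0 \<and> finite D1 \<and> D0 \<inter> {..<b + u} = \<sigma> \<and>
        D1 \<inter> {..<b + u} = \<sigma> \<and> eval D0 p [x] y0 \<and> eval D1 p [x] y1 \<and> y0 \<noteq> y1" for b
    proof (rule ccontr)
      assume "\<not> (\<exists>x D0 D1 y0 y1. finite D0 \<and> finite D1 \<and> D0 \<inter> {..<b + u} = \<sigma> \<and>
        D1 \<inter> {..<b + u} = \<sigma> \<and> eval D0 p [x] y0 \<and> eval D1 p [x] y1 \<and> y0 \<noteq> y1)"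
      then have "\<forall>x D0 D1 y0 y1. finite D0 \<and> finite D1 \<and> D0 \<inter> {..<b + u} = \<sigma> \<and>
        D1 \<inter> {..<b + u} = \<sigma> \<and> eval D0 p [x] y0 \<and> eval D1 p [x] y1 \<longrightarrow> y0 = y1" by blast
      then show False using nt by blast
    qed
    have "\<not> hyperimmune (- A)" by (rule hyp_escape[OF fin sA su notc1 pairs inf])
    with hi show False by simp
  qed
  then obtain b0 where b0: "\<forall>x Da Db ya yb. finite Da \<and> finite Db \<and> Da \<inter> {..<b0 + u} = \<sigma> \<and>
        Db \<inter> {..<b0 + u} = \<sigma> \<and> eval Da p [x] ya \<and> eval Db p [x] yb \<longrightarrow> ya = yb" by (rule exE)
  let ?B = "b0 + u"
  have "{..<u} \<subseteq> {..<?B}" unfolding lessThan_subset_iff by simp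
  with su have sB: "\<sigma> \<subseteq> {..<?B}" by (rule subset_trans)
  show ?thesis
  proof (cases "\<exists>x. \<forall>D y. finite D \<longrightarrow> D \<subseteq> A \<longrightarrow> D \<inter> {..<?B} = \<sigma> \<longrightarrow> \<not> eval D p [x] y")
    case True
    then obtain x where x: "\<And>D y. finite D \<Longrightarrow> D \<subseteq> A \<Longrightarrow> D \<inter> {..<?B} = \<sigma> \<Longrightarrow> \<not> eval D p [x] y"
      by blast
    have "\<forall>G. G \<subseteq> A \<longrightarrow> G \<inter> {..<?B} = \<sigma> \<longrightarrow> \<not> (\<forall>x. eval G p [x] (?chi x))"
    proof (intro allI impI notI)
      fix G assume GA: "G \<subseteq> A" and GB: "G \<inter> {..<?B} = \<sigma>" and all: "\<forall>x. eval G p [x] (?chi x)"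
      then have ev: "eval G p [x] (?chi x)" by blast
      obtain w where w: "\<forall>Y. agree G Y w \<longrightarrow> eval Y p [x] (?chi x)" using eval_use[OF ev] by blast
      let ?m = "max w ?B"
      let ?D = "G \<inter> {..<?m}"
      have "finite ?D" by simp
      moreover have "?D \<subseteq> A" using GA by blast
      moreover have "?D \<inter> {..<?B} = \<sigma>" using Int_lessThan_mono[of ?B ?m G] GB by simp
      moreover have "agree G ?D w" unfolding agree_def using Int_lessThan_mono[of w ?m G] by simp
      then have "eval ?D p [x] (?chi x)" using w by blast
      ultimately show False using x by blast
    qed
    moreover have "\<sigma> \<inter> {..<u} = \<sigma>" by (rule Int_lessThan_absorb[OF su])
    ultimately show ?thesis using fin sA sB by (intro exI[of _ \<sigma>] exI[of _ ?B]) simp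
  next
    case False
    then have cov: "\<And>x. \<exists>D y. finite D \<and> D \<subseteq> A \<and> D \<inter> {..<?B} = \<sigma> \<and> eval D p [x] y" by blast
    let ?K = "set_encode \<sigma>"
    have "computable_set C"
    proof (rule computable_C[where b = ?B and K = ?K and p = p])
      fix x
      obtain D y where D: "finite D" "D \<subseteq> A" "D \<inter> {..<?B} = \<sigma>" "eval D p [x] y" using cov by blast
      obtain s0 where "\<forall>s\<ge>s0. fc p s D [x] = Suc y" using fc_complete[OF D(4)] by blast
      then have "fc p s0 D [x] = Suc y" by blast
      then have "fc p s0 (set_decode (set_encode D)) [x] \<noteq> 0" using D(1) by (simp add: set_encode_inverse)
      moreover have "set_encode D mod 2 ^ ?B = ?K" by (rule enc_mod[OF D(1) D(3)])
      ultimately show "\<exists>c s. c mod 2 ^ ?B = ?K \<and> fc p s (set_decode c) [x] \<noteq> 0" by blast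
    next
      fix x c s y
      assume cm: "c mod 2 ^ ?B = ?K" and fy: "fc p s (set_decode c) [x] = Suc y"
      have ev: "eval (set_decode c) p [x] y" by (rule fc_sound[OF fy])
      have dc: "set_decode c \<inter> {..<?B} = \<sigma>" by (rule dec_mod[OF fin cm])
      obtain D y' where D: "finite D" "D \<subseteq> A" "D \<inter> {..<?B} = \<sigma>" "eval D p [x] y'" using cov by blast
      have "D \<inter> {..<u} = \<sigma>" by (rule subset_lessThan_Int[OF su _ D(3)]) simp
      then have y': "y' = ?chi x" using notc1[OF D(1) D(2) _ D(4)] by blast
      have "y = y'" using b0[rule_format, where x=x and Da="set_decode c" and Db=D and ya=y and yb=y'] finite_set_decode D(1) dc D(3) ev D(4)
        by simp
      then show "y = ?chi x" using y' by simp
    qed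
    with nc show ?thesis by simp
  qed
qed



instance recf :: countable by countable_datatype

definition good :: "nat set \<Rightarrow> nat set \<Rightarrow> recf \<Rightarrow> nat set \<times> nat \<Rightarrow> nat set \<times> nat \<Rightarrow> bool" where
  "good A C p s s' \<longleftrightarrow> finite (fst s') \<and> fst s' \<subseteq> A \<and> fst s' \<subseteq> {..<snd s'} \<and> snd s < snd s' \<and>
     fst s' \<inter> {..<snd s} = fst s \<and> card (fst s) < card (fst s') \<and>
     (\<forall>G. G \<subseteq> A \<longrightarrow> G \<inter> {..<snd s'} = fst s' \<longrightarrow> \<not> (\<forall>x. eval G p [x] (if x \<in> C then 1 else 0)))"

lemma key_step:
  fixes A C :: "nat set"
  assumes nc: "\<not> computable_set C" and hi: "hyperimmune (- A)" and infA: "infinite A"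
    and fin: "finite \<sigma>" and sA: "\<sigma> \<subseteq> A" and su: "\<sigma> \<subseteq> {..<u}"
  shows "\<exists>s'. good A C p (\<sigma>, u) s'"
proof -
  obtain a where a: "a \<in> A" "u \<le> a" using infA unfolding infinite_nat_iff_unbounded_le by blast
  let ?s1 = "insert a \<sigma>"
  have anot: "a \<notin> \<sigma>" using su a(2) by auto
  have "{..<u} \<subseteq> {..<Suc a}" unfolding lessThan_subset_iff using a(2) by simp
  then have s1u: "?s1 \<subseteq> {..<Suc a}" using su by auto
  obtain \<sigma>' u' where r: "finite \<sigma>'" "\<sigma>' \<subseteq> A" "\<sigma>' \<subseteq> {..<u'}" "Suc a \<le> u'" "\<sigma>' \<inter> {..<Suc a} = ?s1"
    "\<forall>G. G \<subseteq> A \<longrightarrow> G \<inter> {..<u'} = \<sigma>' \<longrightarrow> \<not> (\<forall>x. eval G p [x] (if x \<in> C then 1 else 0))"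
    using req[OF nc hi _ _ s1u, of p] fin sA a(1) by auto
  have "\<sigma>' \<inter> {..<u} = ?s1 \<inter> {..<u}"
    using Int_lessThan_mono[of u "Suc a" \<sigma>'] r(5) a(2) by simp
  also have "\<dots> = \<sigma>"
  proof (rule set_eqI)
    fix i show "i \<in> ?s1 \<inter> {..<u} \<longleftrightarrow> i \<in> \<sigma>" using su a(2) by auto
  qed
  finally have e: "\<sigma>' \<inter> {..<u} = \<sigma>" .
  have "?s1 \<subseteq> \<sigma>'" using r(5) by blast
  then have "card ?s1 \<le> card \<sigma>'" using r(1) by (rule card_mono[rotated])
  moreover have "card ?s1 = Suc (card \<sigma>)" using fin anot by simp
  ultimately have "card \<sigma> < card \<sigma>'" by simp
  moreover have "u < u'" using r(4) a(2) by simp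
  ultimately show ?thesis unfolding good_def using r e by (intro exI[of _ "(\<sigma>', u')"]) simp
qed

theorem main:
  fixes C A :: "nat set"
  assumes nc: "\<not> computable_set C"
    and infA: "infinite A"
    and hi: "hyperimmune (- A)"
  shows "\<exists>G. G \<subseteq> A \<and> infinite G \<and> \<not> turing_reducible C G"
proof -
  define inv where "inv s \<longleftrightarrow> finite (fst s) \<and> fst s \<subseteq> A \<and> fst s \<subseteq> {..<snd s}" for s :: "nat set \<times> nat"
  define st where "st = rec_nat ({}, 0) (\<lambda>n s. SOME s'. good A C (from_nat n) s s')"
  have st0: "st 0 = ({}, 0)" unfolding st_def by simp
  have stS: "st (Suc n) = (SOME s'. good A C (from_nat n) (st n) s')" for n unfolding st_def by simp
  have both: "inv (st n) \<and> good A C (from_nat n) (st n) (st (Suc n))" for n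
  proof (induction n)
    case 0
    have i: "inv (st 0)" unfolding inv_def st0 by simp
    have "\<exists>s'. good A C (from_nat 0) (st 0) s'" unfolding st0
      by (rule key_step[OF nc hi infA]) simp_all
    then show ?case using i unfolding stS by (blast intro: someI_ex)
  next
    case (Suc n)
    then have i: "inv (st (Suc n))" unfolding inv_def good_def by blast
    obtain \<sigma> u where su: "st (Suc n) = (\<sigma>, u)" by (cases "st (Suc n)")
    have "\<exists>s'. good A C (from_nat (Suc n)) (\<sigma>, u) s'"
      by (rule key_step[OF nc hi infA]) (use i su in \<open>simp_all add: inv_def\<close>)
    then have "\<exists>s'. good A C (from_nat (Suc n)) (st (Suc n)) s'" using su by simp
    then show ?case using i unfolding stS[of "Suc n"] by (blast intro: someI_ex)
  qed
  define sg where "sg n = fst (st n)" for n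
  define ub where "ub n = snd (st n)" for n
  have g: "finite (sg (Suc n)) \<and> sg (Suc n) \<subseteq> A \<and> sg (Suc n) \<subseteq> {..<ub (Suc n)} \<and> ub n < ub (Suc n) \<and>
     sg (Suc n) \<inter> {..<ub n} = sg n \<and> card (sg n) < card (sg (Suc n)) \<and>
     (\<forall>G. G \<subseteq> A \<longrightarrow> G \<inter> {..<ub (Suc n)} = sg (Suc n) \<longrightarrow> \<not> (\<forall>x. eval G (from_nat n) [x] (if x \<in> C then 1 else 0)))" for n
    using both[of n] unfolding good_def sg_def ub_def by blast
  have iv: "finite (sg n) \<and> sg n \<subseteq> A \<and> sg n \<subseteq> {..<ub n}" for n
    using both[of n] unfolding inv_def sg_def ub_def by blast
  have ubmono: "ub n \<le> ub m" if "n \<le> m" for n m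
    using that
  proof (induction m)
    case 0 then show ?case by simp
  next
    case (Suc m)
    show ?case
    proof (cases "n = Suc m")
      case True then show ?thesis by simp
    next
      case False
      then have "n \<le> m" using Suc.prems by simp
      then show ?thesis using Suc.IH g[of m] by linarith
    qed
  qed
  have restr: "sg m \<inter> {..<ub n} = sg n" if "n \<le> m" for n m
    using that
  proof (induction m)
    case 0 then show ?case using iv[of 0] by (simp add: Int_lessThan_absorb)
  next
    case (Suc m)
    show ?case
    proof (cases "n = Suc m")
      case True then show ?thesis using iv[of n] by (simp add: Int_lessThan_absorb)
    next
      case False
      then have nm: "n \<le> m" using Suc.prems by simp
      have "sg (Suc m) \<inter> {..<ub n} = (sg (Suc m) \<inter> {..<ub m}) \<inter> {..<ub n}"
        using Int_lessThan_mono[of "ub n" "ub m" "sg (Suc m)"] ubmono[OF nm] by simp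
      also have "\<dots> = sg m \<inter> {..<ub n}" using g[of m] by simp
      also have "\<dots> = sg n" using Suc.IH[OF nm] .
      finally show ?thesis .
    qed
  qed
  define G where "G = (\<Union>n. sg n)"
  have GA: "G \<subseteq> A" unfolding G_def using iv by blast
  have Gr: "G \<inter> {..<ub n} = sg n" for n
  proof (rule set_eqI)
    fix i
    show "i \<in> G \<inter> {..<ub n} \<longleftrightarrow> i \<in> sg n"
    proof
      assume "i \<in> G \<inter> {..<ub n}"
      then obtain m where m: "i \<in> sg m" "i < ub n" unfolding G_def by blast
      show "i \<in> sg n"
      proof (cases "n \<le> m")
        case True
        then have "i \<in> sg m \<inter> {..<ub n}" using m by simp
        then show ?thesis using restr[OF True] by simp
      next
        case False
        then have "m \<le> n" by simp
        then have "sg n \<inter> {..<ub m} = sg m" by (rule restr)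
        then show ?thesis using m(1) by blast
      qed
    next
      assume i: "i \<in> sg n"
      then have "i < ub n" using iv[of n] by blast
      then show "i \<in> G \<inter> {..<ub n}" using i unfolding G_def by blast
    qed
  qed
  have cardg: "n \<le> card (sg n)" for n
  proof (induction n)
    case 0 then show ?case by simp
  next
    case (Suc n) then show ?case using g[of n] by linarith
  qed
  have infG: "infinite G"
  proof
    assume fG: "finite G"
    have "sg (Suc (card G)) \<subseteq> G" unfolding G_def by blast
    then have "card (sg (Suc (card G))) \<le> card G" using fG by (rule card_mono[rotated])
    with cardg[of "Suc (card G)"] show False by simp
  qed
  have nr: "\<not> turing_reducible C G"
  proof
    assume "turing_reducible C G"
    then obtain p where p: "\<forall>x. eval G p [x] (if x \<in> C then 1 else 0)"
      unfolding turing_reducible_def rel_computable_def by blast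
    let ?n = "to_nat p"
    have "\<not> (\<forall>x. eval G (from_nat ?n) [x] (if x \<in> C then 1 else 0))"
      using g[of ?n] GA Gr[of "Suc ?n"] by blast
    with p show False by simp
  qed
  show ?thesis using GA infG nr by blast
qed


theorem proposition3p4:
  fixes C A :: "nat set"
  assumes "\<not> computable_set C"
    and "infinite A"
    and "hyperimmune (- A)"
  shows "\<exists>G. G \<subseteq> A \<and> infinite G \<and> \<not> turing_reducible C G"
  by (rule main[OF assms])

end
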